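(* Let $E$ be a Banach lattice. The following assertions are equivalent: (1) Each positive Dunford–Pettis operator $T:E\to E$ is uaw-Dunford–Pettis. (2) Each positive compact operator $T:E\to E$ is uaw-Dunford–Pettis. (3) The norm of the dual Banach lattice $E'$ is order continuous.
   Context: All operators are continuous linear operators. A net $(x_\alpha)$ in a Banach lattice $E$ is uaw-convergent to $x$ (written $x_\alpha\xrightarrow{uaw}x$) if $|x_\alpha-x|\wedge u\to 0$ weakly for every $u\in E_+$. An operator $T$ from a Banach lattice $E$ into a Banach space $X$ is uaw-Dunford–Pettis if for every norm bounded sequence $(x_n)$ in $E$ with $x_n\xrightarrow{uaw}0$ one has $\|Tx_n\|\to 0$. An operator between Banach spaces is Dunford–Pettis if it maps weakly null sequences to norm null sequences. *)

theory Defs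
  imports "HOL-Analysis.Analysis"
begin

class banach_lattice = banach + ordered_real_vector + lattice +
  assumes lattice_norm: "sup x (- x) \<le> sup y (- y) \<Longrightarrow> norm x \<le> norm y"

definition labs :: "'a::banach_lattice \<Rightarrow> 'a" where
  "labs x = sup x (- x)"

definition weakly_null :: "(nat \<Rightarrow> 'a::real_normed_vector) \<Rightarrow> bool" where
  "weakly_null x \<longleftrightarrow>
     (\<forall>f :: 'a \<Rightarrow> real. bounded_linear f \<longrightarrow> (\<lambda>n. f (x n)) \<longlonglongrightarrow> 0)"

definition uaw_convergent :: "(nat \<Rightarrow> 'a::banach_lattice) \<Rightarrow> 'a \<Rightarrow> bool" where
  "uaw_convergent x l \<longleftrightarrow>
     (\<forall>u. 0 \<le> u \<longrightarrow> weakly_null (\<lambda>n. inf (labs (x n - l)) u))"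

definition positive_op :: "('a::banach_lattice \<Rightarrow> 'b::banach_lattice) \<Rightarrow> bool" where
  "positive_op T \<longleftrightarrow> (\<forall>x. 0 \<le> x \<longrightarrow> 0 \<le> T x)"

definition compact_op :: "('a::real_normed_vector \<Rightarrow> 'b::real_normed_vector) \<Rightarrow> bool" where
  "compact_op T \<longleftrightarrow> bounded_linear T \<and> compact (closure (T ` ball 0 1))"

definition dunford_pettis_op :: "('a::real_normed_vector \<Rightarrow> 'b::real_normed_vector) \<Rightarrow> bool" where
  "dunford_pettis_op T \<longleftrightarrow> bounded_linear T \<and>
     (\<forall>x. weakly_null x \<longrightarrow> (\<lambda>n. norm (T (x n))) \<longlonglongrightarrow> 0)"

definition uaw_dunford_pettis_op :: "('a::banach_lattice \<Rightarrow> 'b::real_normed_vector) \<Rightarrow> bool" where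
  "uaw_dunford_pettis_op T \<longleftrightarrow> bounded_linear T \<and>
     (\<forall>x. bounded (range x) \<longrightarrow> uaw_convergent x 0 \<longrightarrow> (\<lambda>n. norm (T (x n))) \<longlonglongrightarrow> 0)"

definition dual_le :: "('a::banach_lattice \<Rightarrow>\<^sub>L real) \<Rightarrow> ('a \<Rightarrow>\<^sub>L real) \<Rightarrow> bool" where
  "dual_le f g \<longleftrightarrow> (\<forall>x. 0 \<le> x \<longrightarrow> blinfun_apply f x \<le> blinfun_apply g x)"

text \<open>Order continuity of the norm of E': for every net f_\<alpha> \<down> 0 in E',
  norm f_\<alpha> \<rightarrow> 0.  Nets decreasing to 0 are (up to reindexing) exactly the
  nonempty downward directed sets D with infimum 0; along such a set the norm
  is decreasing, so norm convergence to 0 means the norms get arbitrarily small.\<close>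
definition dual_order_continuous_norm :: "'a::banach_lattice itself \<Rightarrow> bool" where
  "dual_order_continuous_norm _ \<longleftrightarrow>
     (\<forall>D :: ('a \<Rightarrow>\<^sub>L real) set.
        D \<noteq> {}
        \<longrightarrow> (\<forall>f\<in>D. \<forall>g\<in>D. \<exists>h\<in>D. dual_le h f \<and> dual_le h g)
        \<longrightarrow> (\<forall>f\<in>D. dual_le 0 f)
        \<longrightarrow> (\<forall>h. (\<forall>f\<in>D. dual_le h f) \<longrightarrow> dual_le h 0)
        \<longrightarrow> (\<forall>\<epsilon>>0. \<exists>f\<in>D. norm f < \<epsilon>))"

end

theory Submission
  imports Defs "HOL-Library.Lattice_Algebras"
begin

subclass (in banach_lattice) lattice_ab_group_add ..

context
  fixes dummy :: "'a::banach_lattice"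
begin
end

lemma bl_abs_nonneg: "0 \<le> sup (x::'a::banach_lattice) (- x)"
proof -
  have "0 \<le> sup x (-x) + sup x (-x)"
    by (metis add.right_inverse add_mono sup.cobounded1 sup.cobounded2)
  then show ?thesis by simp
qed

lemma pprt_plus_neg: "pprt (x::'a::banach_lattice) = x + pprt (-x)"
  by (simp add: pprt_def add_sup_distrib_left sup_commute)

lemma pprt_minus_neg: "pprt (x::'a::banach_lattice) - pprt (-x) = x"
  using pprt_plus_neg[of x] by (simp add: algebra_simps)

lemma pprt_inf_neg: "inf (pprt (x::'a::banach_lattice)) (pprt (-x)) = 0"
proof -
  have "inf (pprt x) (pprt (-x)) = inf (x + pprt (-x)) (0 + pprt (-x))"
    using pprt_plus_neg[of x] by simp
  also have "\<dots> = inf x 0 + pprt (-x)" by (simp add: add_inf_distrib_right)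
  also have "inf x 0 = - pprt (-x)" using pprt_neg[of x] by (simp add: nprt_def)
  finally show ?thesis by simp
qed

lemma scaleR_inf: "0 \<le> c \<Longrightarrow> c *\<^sub>R inf (x::'a::banach_lattice) y = inf (c *\<^sub>R x) (c *\<^sub>R y)"
proof (cases "c = 0")
  case False
  assume c: "0 \<le> c"
  then have cp: "0 < c" using False by simp
  show ?thesis
  proof (rule antisym)
    show "c *\<^sub>R inf x y \<le> inf (c *\<^sub>R x) (c *\<^sub>R y)"
      using c by (simp add: scaleR_left_mono)
    have "inverse c *\<^sub>R inf (c *\<^sub>R x) (c *\<^sub>R y) \<le> x"
      using cp scaleR_left_mono[of "inf (c *\<^sub>R x) (c *\<^sub>R y)" "c *\<^sub>R x" "inverse c"] by simp
    moreover have "inverse c *\<^sub>R inf (c *\<^sub>R x) (c *\<^sub>R y) \<le> y"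
      using cp scaleR_left_mono[of "inf (c *\<^sub>R x) (c *\<^sub>R y)" "c *\<^sub>R y" "inverse c"] by simp
    ultimately have "inverse c *\<^sub>R inf (c *\<^sub>R x) (c *\<^sub>R y) \<le> inf x y" by simp
    then have "c *\<^sub>R (inverse c *\<^sub>R inf (c *\<^sub>R x) (c *\<^sub>R y)) \<le> c *\<^sub>R inf x y"
      by (rule scaleR_left_mono[OF _ c])
    then show "inf (c *\<^sub>R x) (c *\<^sub>R y) \<le> c *\<^sub>R inf x y" using False by simp
  qed
qed simp

lemma scaleR_sup: "0 \<le> c \<Longrightarrow> c *\<^sub>R sup (x::'a::banach_lattice) y = sup (c *\<^sub>R x) (c *\<^sub>R y)"
proof -
  assume c: "0 \<le> c"
  have "c *\<^sub>R inf (-x) (-y) = inf (c *\<^sub>R (-x)) (c *\<^sub>R (-y))" by (rule scaleR_inf[OF c])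
  then have "- (c *\<^sub>R inf (-x) (-y)) = - inf (- (c *\<^sub>R x)) (- (c *\<^sub>R y))" by simp
  moreover have "- inf (- (c *\<^sub>R x)) (- (c *\<^sub>R y)) = sup (c *\<^sub>R x) (c *\<^sub>R y)"
    by (rule sup_eq_neg_inf[symmetric])
  moreover have "- (c *\<^sub>R inf (-x) (-y)) = c *\<^sub>R sup x y"
    using sup_eq_neg_inf[of x y] by (metis scaleR_minus_right)
  ultimately show ?thesis by simp
qed

lemma scaleR_pprt: "0 \<le> c \<Longrightarrow> c *\<^sub>R pprt (x::'a::banach_lattice) = pprt (c *\<^sub>R x)"
  by (simp add: pprt_def scaleR_sup)

lemma inf_add_le: "0 \<le> (c::'a::banach_lattice) \<Longrightarrow> inf a (b + c) \<le> inf a b + c"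
proof -
  assume c: "0 \<le> c"
  have "inf a (b + c) \<le> inf (a + c) (b + c)"
    using c by (meson add_increasing2 inf_mono order_refl)
  also have "\<dots> = inf a b + c" by (simp add: add_inf_distrib_right)
  finally show ?thesis .
qed

lemma inf_add_le2: "0 \<le> (x::'a::banach_lattice) \<Longrightarrow> 0 \<le> y \<Longrightarrow> 0 \<le> w \<Longrightarrow> inf (x + y) w \<le> inf x w + inf y w"
proof -
  assume x: "0 \<le> x" and y: "0 \<le> y" and w: "0 \<le> w"
  have A: "inf (p + q) w \<le> inf p w + q" if "0 \<le> q" for p q :: 'a
  proof -
    have "q + inf p (w - q) = inf (q + p) (q + (w - q))" by (rule add_inf_distrib_left)
    then have "inf (p + q) w = q + inf p (w - q)" by (simp add: add.commute)
    then have "inf (p + q) w - q = inf p (w - q)" by simp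
    also have "\<dots> \<le> inf p w" using that by (simp add: inf.coboundedI2 le_infI1)
    finally have "inf (p + q) w - q \<le> inf p w" .
    then show ?thesis by (simp only: diff_le_eq)
  qed
  have "inf (x + y) w \<le> inf (inf x w + y) w"
    using A[OF y, of x] by simp
  also have "\<dots> = inf (y + inf x w) w" by (simp add: add.commute)
  also have "\<dots> \<le> inf y w + inf x w"
    using A[of "inf x w" y] x w by (simp add: add.commute)
  finally show ?thesis by (simp add: add.commute)
qed

lemma pprt_diff_inf: "pprt ((a::'a::banach_lattice) - b) = a - inf a b"
proof -
  have "pprt (a - b) = sup (a + - b) (a + - a)" by (simp add: pprt_def)
  also have "\<dots> = a + sup (-b) (-a)" by (simp add: add_sup_distrib_left)
  also have "\<dots> = a - inf a b" by (simp add: diff_inf_eq_sup sup_commute)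
  finally show ?thesis .
qed

lemma disj_add_sup: "inf (a::'a::banach_lattice) b = 0 \<Longrightarrow> a + b = sup a b"
  using add_eq_inf_sup[of a b] by simp


lemma labs_nonneg: "0 \<le> (x::'a::banach_lattice) \<Longrightarrow> sup x (-x) = x"
  by (meson neg_le_0_iff_le order_trans sup.absorb1)

lemma norm_labs[simp]: "norm (labs (x::'a::banach_lattice)) = norm x"
proof -
  have "sup (labs x) (- labs x) = labs x"
    by (rule labs_nonneg) (simp add: labs_def bl_abs_nonneg)
  then show ?thesis
    using lattice_norm[of "labs x" x] lattice_norm[of x "labs x"] by (simp add: labs_def)
qed

lemma norm_mono_pos: "0 \<le> (y::'a::banach_lattice) \<Longrightarrow> y \<le> x \<Longrightarrow> norm y \<le> norm x"
  by (rule lattice_norm) (simp add: labs_nonneg)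

lemma pprt_le_labs: "pprt (x::'a::banach_lattice) \<le> labs x"
  unfolding pprt_def labs_def using bl_abs_nonneg[of x] by (simp add: le_supI1)

lemma norm_pprt_le: "norm (pprt (x::'a::banach_lattice)) \<le> norm x"
proof -
  have "norm (pprt x) \<le> norm (labs x)" by (rule norm_mono_pos) (simp_all add: pprt_le_labs)
  then show ?thesis by simp
qed

lemma norm_nprt_le: "norm (pprt (- (x::'a::banach_lattice))) \<le> norm x"
  using norm_pprt_le[of "-x"] by simp

lemma labs_le: "(d::'a::banach_lattice) \<le> c \<Longrightarrow> - d \<le> c \<Longrightarrow> norm d \<le> norm c"
proof -
  assume "d \<le> c" "- d \<le> c"
  then have 1: "sup d (-d) \<le> c" by simp
  then have "0 \<le> c" using bl_abs_nonneg[of d] order_trans by blast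
  then have "sup c (-c) = c" by (rule labs_nonneg)
  then show ?thesis using 1 lattice_norm[of d c] by simp
qed

lemma pprt_sub_le: "pprt (a::'a::banach_lattice) - pprt b \<le> labs (a - b)"
proof -
  have "a \<le> pprt b + pprt (a - b)"
    by (metis add_mono diff_add_cancel add.commute pprt_def sup.cobounded1)
  moreover have "0 \<le> pprt b + pprt (a - b)" by simp
  ultimately have "pprt a \<le> pprt b + pprt (a - b)" by (simp add: pprt_def)
  then have "pprt a - pprt b \<le> pprt (a - b)" by (simp add: algebra_simps)
  then show ?thesis using pprt_le_labs order_trans by blast
qed

lemma labs_minus_comm: "labs ((a::'a::banach_lattice) - b) = labs (b - a)"
  by (simp add: labs_def sup_commute)

lemma norm_pprt_lip: "norm (pprt (a::'a::banach_lattice) - pprt b) \<le> norm (a - b)"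
proof -
  have "norm (pprt a - pprt b) \<le> norm (labs (a - b))"
  proof (rule labs_le)
    show "pprt a - pprt b \<le> labs (a - b)" by (rule pprt_sub_le)
    show "- (pprt a - pprt b) \<le> labs (a - b)"
      using pprt_sub_le[of b a] labs_minus_comm[of a b] by simp
  qed
  then show ?thesis by simp
qed

lemma closed_pos_cone: "closed {x::'a::banach_lattice. 0 \<le> x}"
proof -
  have "continuous_on UNIV (\<lambda>x::'a. pprt (- x))"
  proof (rule lipschitz_on_continuous_on)
    show "1-lipschitz_on UNIV (\<lambda>x::'a. pprt (- x))"
    proof (rule lipschitz_onI)
      fix x y :: 'a
      have "norm (pprt (- x) - pprt (- y)) \<le> norm (- x - - y)" by (rule norm_pprt_lip)
      also have "- x - - y = - (x - y)" by simp
      finally show "dist (pprt (- x)) (pprt (- y)) \<le> 1 * dist x y" by (simp add: dist_norm norm_minus_commute)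
    qed simp
  qed
  then have "closed {x::'a. pprt (- x) = 0}"
    by (rule closed_Collect_eq) (rule continuous_on_const)
  moreover have "{x::'a. pprt (- x) = 0} = {x. 0 \<le> x}"
    by (auto simp: pprt_def simp flip: le_iff_sup)
  ultimately show ?thesis by simp
qed

definition pos_fun :: "('a::banach_lattice \<Rightarrow>\<^sub>L real) \<Rightarrow> bool" where
  "pos_fun g \<longleftrightarrow> (\<forall>x. 0 \<le> x \<longrightarrow> 0 \<le> blinfun_apply g x)"

lemma pos_fun_dual: "pos_fun g \<longleftrightarrow> dual_le 0 g"
  by (simp add: pos_fun_def dual_le_def)

lemma pos_fun_mono: "pos_fun g \<Longrightarrow> x \<le> y \<Longrightarrow> blinfun_apply g x \<le> blinfun_apply g y"
  unfolding pos_fun_def by (metis blinfun.diff_right diff_ge_0_iff_ge)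

lemma pos_fun_abs: "pos_fun g \<Longrightarrow> \<bar>blinfun_apply g x\<bar> \<le> blinfun_apply g (labs x)"
proof -
  assume g: "pos_fun g"
  have "blinfun_apply g x \<le> blinfun_apply g (labs x)"
    by (rule pos_fun_mono[OF g]) (simp add: labs_def)
  moreover have "blinfun_apply g (-x) \<le> blinfun_apply g (labs x)"
    by (rule pos_fun_mono[OF g]) (simp add: labs_def)
  ultimately show ?thesis by (simp add: blinfun.minus_right)
qed

lemma cone_extend:
  fixes h :: "'a::banach_lattice \<Rightarrow> real"
  assumes add: "\<And>x y. 0 \<le> x \<Longrightarrow> 0 \<le> y \<Longrightarrow> h (x + y) = h x + h y"
    and hom: "\<And>c x. 0 \<le> c \<Longrightarrow> 0 \<le> x \<Longrightarrow> h (c *\<^sub>R x) = c * h x"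
    and bnd: "\<And>x. 0 \<le> x \<Longrightarrow> h x \<le> C * norm x"
    and nonneg: "\<And>x. 0 \<le> x \<Longrightarrow> 0 \<le> h x"
  shows "\<exists>F. pos_fun F \<and> (\<forall>x. 0 \<le> x \<longrightarrow> blinfun_apply F x = h x)"
proof -
  define F0 where "F0 x = h (pprt x) - h (pprt (- x))" for x
  have h0: "h 0 = 0" using hom[of 0 0] by simp
  have key: "F0 x = h a - h b" if "0 \<le> a" "0 \<le> b" "x = a - b" for x a b
  proof -
    have "pprt x - pprt (-x) = a - b" using pprt_minus_neg[of x] that by simp
    then have "pprt x + b = a + pprt (-x)" by (simp add: algebra_simps)
    then have "h (pprt x + b) = h (a + pprt (-x))" by simp
    then have "h (pprt x) + h b = h a + h (pprt (-x))" using add that by simp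
    then show ?thesis by (simp add: F0_def)
  qed
  have F0add: "F0 (x + y) = F0 x + F0 y" for x y
  proof -
    have "x + y = (pprt x + pprt y) - (pprt (-x) + pprt (-y))"
      by (metis add_diff_add pprt_minus_neg)
    then have "F0 (x + y) = h (pprt x + pprt y) - h (pprt (-x) + pprt (-y))"
      by (intro key) simp_all
    then show ?thesis by (simp add: add F0_def)
  qed
  have F0scale: "F0 (c *\<^sub>R x) = c * F0 x" for c x
  proof (cases "0 \<le> c")
    case True
    have "c *\<^sub>R x = c *\<^sub>R pprt x - c *\<^sub>R pprt (-x)"
      by (metis pprt_minus_neg scaleR_diff_right)
    then have "F0 (c *\<^sub>R x) = h (c *\<^sub>R pprt x) - h (c *\<^sub>R pprt (-x))"
      by (intro key) (use True in \<open>simp_all add: scaleR_nonneg_nonneg\<close>)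
    then show ?thesis using True by (simp add: hom F0_def algebra_simps)
  next
    case False
    have "c *\<^sub>R x = (-c) *\<^sub>R pprt (-x) - (-c) *\<^sub>R pprt x"
      by (metis pprt_minus_neg scaleR_diff_right minus_diff_eq scaleR_minus_left scaleR_minus_right)
    then have "F0 (c *\<^sub>R x) = h ((-c) *\<^sub>R pprt (-x)) - h ((-c) *\<^sub>R pprt x)"
      by (intro key) (use False in \<open>simp_all add: scaleR_nonpos_nonneg\<close>)
    then show ?thesis using False hom[of "-c" "pprt (-x)"] hom[of "-c" "pprt x"] by (simp add: F0_def algebra_simps)
  qed
  have F0bnd: "norm (F0 x) \<le> norm x * (2 * \<bar>C\<bar>)" for x
  proof -
    have "h (pprt x) \<le> \<bar>C\<bar> * norm x"
      using bnd[of "pprt x"] norm_pprt_le[of x]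
      by (smt (verit, best) abs_ge_self mult_mono norm_ge_zero zero_le_pprt)
    moreover have "h (pprt (-x)) \<le> \<bar>C\<bar> * norm x"
      using bnd[of "pprt (-x)"] norm_nprt_le[of x]
      by (smt (verit, best) abs_ge_self mult_mono norm_ge_zero zero_le_pprt)
    moreover have "0 \<le> h (pprt x)" "0 \<le> h (pprt (-x))" by (simp_all add: nonneg)
    ultimately show ?thesis unfolding F0_def real_norm_def by (simp add: abs_le_iff algebra_simps)
  qed
  have bl: "bounded_linear F0"
    by (rule bounded_linear_intro[where K="2 * \<bar>C\<bar>", OF F0add]) (use F0bnd in \<open>simp_all add: F0scale\<close>)
  define F where "F = Blinfun F0"
  have Fa: "blinfun_apply F = F0" unfolding F_def using bl by (simp add: bounded_linear_Blinfun_apply)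
  have "blinfun_apply F x = h x" if "0 \<le> x" for x
    using key[of x 0 x] that h0 Fa by simp
  moreover then have "pos_fun F" using nonneg by (simp add: pos_fun_def)
  ultimately show ?thesis by blast
qed


lemma le_sum_nonneg:
  fixes f :: "'b \<Rightarrow> 'a::banach_lattice"
  assumes "finite F" "i \<in> F" "\<And>j. j \<in> F \<Longrightarrow> 0 \<le> f j"
  shows "f i \<le> sum f F"
proof -
  have "sum f F = f i + sum f (F - {i})" using assms by (simp add: sum.remove)
  moreover have "0 \<le> sum f (F - {i})" using assms(3) by (intro sum_nonneg) blast
  ultimately show ?thesis by simp
qed

lemma inf_sum_le:
  fixes z :: "'b \<Rightarrow> 'a::banach_lattice"
  assumes "finite F" "\<And>j. j \<in> F \<Longrightarrow> 0 \<le> z j" "0 \<le> w"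
  shows "inf (sum z F) w \<le> sum (\<lambda>j. inf (z j) w) F"
  using assms
proof (induction F rule: finite_induct)
  case empty
  then show ?case by simp
next
  case (insert i F)
  have "inf (sum z (insert i F)) w = inf (z i + sum z F) w" using insert by simp
  also have "\<dots> \<le> inf (z i) w + inf (sum z F) w"
    by (rule inf_add_le2) (use insert in \<open>simp_all add: sum_nonneg\<close>)
  also have "\<dots> \<le> inf (z i) w + sum (\<lambda>j. inf (z j) w) F"
    using insert by (simp add: add_left_mono)
  finally show ?case using insert by simp
qed

lemma disj_sum_le:
  fixes z :: "'b \<Rightarrow> 'a::banach_lattice"
  assumes "finite F" "\<And>i. i \<in> F \<Longrightarrow> 0 \<le> z i" "\<And>i. i \<in> F \<Longrightarrow> z i \<le> u"
    "\<And>i j. i \<in> F \<Longrightarrow> j \<in> F \<Longrightarrow> i \<noteq> j \<Longrightarrow> inf (z i) (z j) = 0"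
    "0 \<le> u"
  shows "sum z F \<le> u"
  using assms
proof (induction F rule: finite_induct)
  case empty
  then show ?case by simp
next
  case (insert i F)
  have s0: "0 \<le> sum z F" using insert by (simp add: sum_nonneg)
  have "inf (sum z F) (z i) \<le> sum (\<lambda>j. inf (z j) (z i)) F"
    by (rule inf_sum_le) (use insert in auto)
  also have "\<dots> = 0"
  proof (rule sum.neutral, intro ballI)
    fix j assume "j \<in> F"
    then have "j \<noteq> i" using insert by blast
    then show "inf (z j) (z i) = 0" using insert \<open>j \<in> F\<close> by simp
  qed
  finally have "inf (sum z F) (z i) = 0" using s0 insert by (simp add: antisym)
  then have "sum z F + z i = sup (sum z F) (z i)" by (rule disj_add_sup)
  moreover have "sum z F \<le> u" using insert by simp
  ultimately show ?case using insert by (simp add: add.commute)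
qed

lemma disj_weakly_null:
  fixes z :: "nat \<Rightarrow> 'a::banach_lattice"
  assumes pos: "\<And>n. 0 \<le> z n" and le: "\<And>n. z n \<le> u"
    and disj: "\<And>n m. n \<noteq> m \<Longrightarrow> inf (z n) (z m) = 0"
  shows "weakly_null z"
  unfolding weakly_null_def
proof (intro allI impI)
  fix f :: "'a \<Rightarrow> real"
  assume f: "bounded_linear f"
  then obtain K where K: "\<And>x. norm (f x) \<le> norm x * K" and K0: "0 \<le> K"
    using bounded_linear.nonneg_bounded by blast
  have lin: "linear f" using f by (rule bounded_linear.linear)
  have u0: "0 \<le> u" using pos le order_trans by blast
  have sub: "\<bar>f (sum z P)\<bar> \<le> norm u * K" if "P \<subseteq> {..<N}" for P N
  proof -
    have fin: "finite P" using that finite_subset by blast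
    have a: "0 \<le> sum z P" using pos by (simp add: sum_nonneg)
    have b: "sum z P \<le> u" by (rule disj_sum_le) (use fin pos le disj u0 in auto)
    have "norm (sum z P) \<le> norm u" using a b by (rule norm_mono_pos)
    then have "norm (sum z P) * K \<le> norm u * K" using K0 by (rule mult_right_mono)
    moreover have "\<bar>f (sum z P)\<bar> \<le> norm (sum z P) * K" using K[of "sum z P"] by simp
    ultimately show ?thesis by linarith
  qed
  have "summable (\<lambda>n. \<bar>f (z n)\<bar>)"
  proof (rule summableI_nonneg_bounded)
    fix N
    define P where "P = {n \<in> {..<N}. 0 \<le> f (z n)}"
    define Q where "Q = {n \<in> {..<N}. \<not> 0 \<le> f (z n)}"
    have U: "{..<N} = P \<union> Q" and I: "P \<inter> Q = {}" unfolding P_def Q_def by auto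
    have fP: "finite P" and fQ: "finite Q" unfolding P_def Q_def by auto
    have "(\<Sum>i<N. \<bar>f (z i)\<bar>) = (\<Sum>i\<in>P. \<bar>f (z i)\<bar>) + (\<Sum>i\<in>Q. \<bar>f (z i)\<bar>)"
      unfolding U using fP fQ I by (rule sum.union_disjoint)
    also have "(\<Sum>i\<in>P. \<bar>f (z i)\<bar>) = (\<Sum>i\<in>P. f (z i))"
      by (rule sum.cong) (auto simp: P_def)
    also have "(\<Sum>i\<in>Q. \<bar>f (z i)\<bar>) = - (\<Sum>i\<in>Q. f (z i))"
      unfolding sum_negf[symmetric] by (rule sum.cong) (auto simp: Q_def)
    also have "(\<Sum>i\<in>P. f (z i)) = f (sum z P)" by (simp add: linear_sum[OF lin])
    also have "(\<Sum>i\<in>Q. f (z i)) = f (sum z Q)" by (simp add: linear_sum[OF lin])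
    finally have eq: "(\<Sum>i<N. \<bar>f (z i)\<bar>) = f (sum z P) + - f (sum z Q)" .
    have "\<bar>f (sum z P)\<bar> \<le> norm u * K" by (rule sub[of P N]) (auto simp: P_def)
    moreover have "\<bar>f (sum z Q)\<bar> \<le> norm u * K" by (rule sub[of Q N]) (auto simp: Q_def)
    ultimately show "(\<Sum>i<N. \<bar>f (z i)\<bar>) \<le> 2 * (norm u * K)" unfolding eq by linarith
  qed simp
  then have "(\<lambda>n. \<bar>f (z n)\<bar>) \<longlonglongrightarrow> 0" by (rule summable_LIMSEQ_zero)
  then show "(\<lambda>n. f (z n)) \<longlonglongrightarrow> 0" by (simp add: tendsto_rabs_zero_iff)
qed

lemma disj_uaw_null:
  fixes y :: "nat \<Rightarrow> 'a::banach_lattice"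
  assumes pos: "\<And>n. 0 \<le> y n"
    and disj: "\<And>n m. n \<noteq> m \<Longrightarrow> inf (y n) (y m) = 0"
  shows "uaw_convergent y 0"
  unfolding uaw_convergent_def
proof (intro allI impI)
  fix u :: 'a assume u: "0 \<le> u"
  have la: "labs (y n - 0) = y n" for n using labs_nonneg[OF pos[of n]] by (simp add: labs_def)
  show "weakly_null (\<lambda>n. inf (labs (y n - 0)) u)"
    unfolding la
  proof (rule disj_weakly_null[where u=u])
    fix n m :: nat assume "n \<noteq> m"
    have "inf (inf (y n) u) (inf (y m) u) \<le> inf (y n) (y m)"
      by (meson inf.cobounded1 inf_mono)
    moreover have "0 \<le> inf (inf (y n) u) (inf (y m) u)" using pos u by simp
    ultimately show "inf (inf (y n) u) (inf (y m) u) = 0" using disj[OF \<open>n \<noteq> m\<close>] by simp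
  qed (use pos u in auto)
qed


lemma disj_key:
  fixes a b :: "'a::banach_lattice"
  assumes a: "0 \<le> a" and b: "0 \<le> b" and s: "0 \<le> s" and t: "0 \<le> t" and st: "1 \<le> s * t"
  shows "inf (pprt (a - s *\<^sub>R b)) (pprt (b - t *\<^sub>R a)) = 0"
proof -
  define u where "u = a - s *\<^sub>R b"
  define v where "v = b - t *\<^sub>R a"
  have "t *\<^sub>R u + v = (1 - s * t) *\<^sub>R b"
    by (simp add: u_def v_def algebra_simps)
  also have "\<dots> \<le> 0" using st b by (simp add: scaleR_nonpos_nonneg)
  finally have h: "t *\<^sub>R u + v \<le> 0" .
  then have "v + t *\<^sub>R u \<le> 0" by (simp add: add.commute)
  then have "v \<le> - (t *\<^sub>R u)" by (simp only: le_eq_neg)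
  then have "v \<le> t *\<^sub>R (- u)" by simp
  then have "pprt v \<le> pprt (t *\<^sub>R (- u))" by (rule pprt_mono)
  also have "\<dots> = t *\<^sub>R pprt (- u)" using scaleR_pprt[OF t, of "-u"] by simp
  finally have pv: "pprt v \<le> t *\<^sub>R pprt (- u)" .
  define k where "k = max 1 t"
  have k0: "0 \<le> k" by (simp add: k_def)
  have "pprt u \<le> k *\<^sub>R pprt u"
    using scaleR_right_mono[of 1 k "pprt u"] by (simp add: k_def)
  moreover have "t *\<^sub>R pprt (- u) \<le> k *\<^sub>R pprt (- u)"
    by (rule scaleR_right_mono) (simp_all add: k_def)
  ultimately have "inf (pprt u) (pprt v) \<le> inf (k *\<^sub>R pprt u) (k *\<^sub>R pprt (- u))"
    using pv by (meson inf_mono order_trans)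
  also have "\<dots> = k *\<^sub>R inf (pprt u) (pprt (- u))" by (rule scaleR_inf[OF k0, symmetric])
  also have "\<dots> = 0" by (simp add: pprt_inf_neg)
  finally have "inf (pprt u) (pprt v) \<le> 0" .
  moreover have "0 \<le> inf (pprt u) (pprt v)" by simp
  ultimately show ?thesis unfolding u_def v_def by simp
qed

lemma pow_arith:
  assumes "n < (m::nat)"
  shows "1 \<le> (1/2::real)^n * (1/2)^(Suc m) * 4^m"
proof -
  have "(2::real)^(n + Suc m) \<le> 2^(2*m)"
    by (rule power_increasing) (use assms in auto)
  moreover have "(4::real)^m = 2^(2*m)" by (simp add: power_mult)
  moreover have "(1/2::real)^n * (1/2)^(Suc m) = 1 / 2^(n + Suc m)"
    by (simp add: power_add power_one_over)
  ultimately show ?thesis by (simp add: field_simps)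
qed

lemma pos_fun_le: "pos_fun g \<Longrightarrow> x \<le> y \<Longrightarrow> blinfun_apply g x \<le> blinfun_apply g y"
  by (rule pos_fun_mono)

lemma disjointify:
  fixes a :: "nat \<Rightarrow> 'a::banach_lattice"
  assumes pos: "\<And>n. 0 \<le> a n" and bnd: "\<And>n. norm (a n) \<le> M"
  shows "\<exists>x y. 0 \<le> x \<and> (\<forall>n. 0 \<le> y n \<and> y n \<le> a (Suc n))
     \<and> (\<forall>n m. n \<noteq> m \<longrightarrow> inf (y n) (y m) = 0)
     \<and> (\<forall>g. pos_fun g \<longrightarrow> (\<forall>n. blinfun_apply g (a (Suc n))
            - blinfun_apply g (inf (a (Suc n)) ((4^n) *\<^sub>R (\<Sum>i\<le>n. a i)))
            - (1/2)^n * blinfun_apply g x \<le> blinfun_apply g (y n)))"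
proof -
  define f where "f n = (1/2::real)^n *\<^sub>R a n" for n
  have M0: "0 \<le> M" using bnd[of 0] norm_ge_zero order_trans by blast
  have sf: "summable f"
  proof (rule summable_comparison_test')
    show "summable (\<lambda>n. M * (1/2::real)^n)" by (simp add: summable_mult)
    fix n :: nat
    show "norm (f n) \<le> M * (1/2)^n"
      using bnd[of n] by (simp add: f_def mult.commute mult_left_mono)
  qed
  define x where "x = suminf f"
  have ps: "(\<lambda>N. \<Sum>i<N. f i) \<longlonglongrightarrow> x" unfolding x_def using sf by (rule summable_LIMSEQ)
  have fpos: "0 \<le> f n" for n by (simp add: f_def pos scaleR_nonneg_nonneg)
  have xge: "f m \<le> x" for m
  proof -
    have "(\<lambda>N. (\<Sum>i<N. f i) - f m) \<longlonglongrightarrow> x - f m" using ps by (intro tendsto_diff) simp_all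
    moreover have "eventually (\<lambda>N. (\<Sum>i<N. f i) - f m \<in> {v. 0 \<le> v}) sequentially"
      unfolding eventually_sequentially
    proof (intro exI allI impI)
      fix N assume "Suc m \<le> N"
      then have "f m \<le> (\<Sum>i<N. f i)" by (intro le_sum_nonneg) (simp_all add: fpos)
      then show "(\<Sum>i<N. f i) - f m \<in> {v. 0 \<le> v}" by simp
    qed
    ultimately have "x - f m \<in> {v. 0 \<le> v}"
      by (intro Lim_in_closed_set[OF closed_pos_cone]) simp_all
    then show ?thesis by simp
  qed
  have x0: "0 \<le> x" using xge[of 0] fpos[of 0] by simp
  define S where "S n = (\<Sum>i\<le>n. a i)" for n
  have S0: "0 \<le> S n" for n by (simp add: S_def pos sum_nonneg)
  define B where "B n = (4::real)^n *\<^sub>R S n" for n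
  define C where "C n = (1/2::real)^n *\<^sub>R x" for n
  have B0: "0 \<le> B n" for n by (simp add: B_def S0 scaleR_nonneg_nonneg)
  have C0: "0 \<le> C n" for n by (simp add: C_def x0 scaleR_nonneg_nonneg)
  define y where "y n = pprt (a (Suc n) - (B n + C n))" for n
  have yeq: "y n = a (Suc n) - inf (a (Suc n)) (B n + C n)" for n
    by (simp add: y_def pprt_diff_inf)
  have y0: "0 \<le> y n" for n by (simp add: y_def)
  have ya: "y n \<le> a (Suc n)" for n
  proof -
    have "0 \<le> inf (a (Suc n)) (B n + C n)" using pos B0 C0 by simp
    then show ?thesis unfolding yeq by (simp only: diff_le_eq le_add_same_cancel1)
  qed
  have disj_lt: "inf (y n) (y m) = 0" if nm: "n < m" for n m
  proof -
    have "a (Suc n) \<le> S m" unfolding S_def by (rule le_sum_nonneg) (use nm pos in auto)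
    then have "(4::real)^m *\<^sub>R a (Suc n) \<le> B m" unfolding B_def by (simp add: scaleR_left_mono)
    then have "(4::real)^m *\<^sub>R a (Suc n) \<le> B m + C m" using C0 by (meson add_increasing2)
    then have ym: "y m \<le> pprt (a (Suc m) - (4::real)^m *\<^sub>R a (Suc n))"
      unfolding y_def by (intro pprt_mono) (simp add: algebra_simps)
    have "f (Suc m) \<le> x" by (rule xge)
    then have "(1/2::real)^n *\<^sub>R f (Suc m) \<le> C n" unfolding C_def by (simp add: scaleR_left_mono)
    then have "((1/2::real)^n * (1/2)^(Suc m)) *\<^sub>R a (Suc m) \<le> B n + C n"
      using B0 by (simp add: f_def add_increasing)
    then have yn: "y n \<le> pprt (a (Suc n) - ((1/2::real)^n * (1/2)^(Suc m)) *\<^sub>R a (Suc m))"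
      unfolding y_def by (intro pprt_mono) (simp add: algebra_simps)
    have "inf (y n) (y m) \<le> inf (pprt (a (Suc n) - ((1/2::real)^n * (1/2)^(Suc m)) *\<^sub>R a (Suc m)))
                                 (pprt (a (Suc m) - (4::real)^m *\<^sub>R a (Suc n)))"
      using yn ym by (rule inf_mono)
    also have "\<dots> = 0"
      by (rule disj_key) (use pos pow_arith[OF nm] in simp_all)
    finally show ?thesis using y0 by (simp add: antisym)
  qed
  have disj: "inf (y n) (y m) = 0" if "n \<noteq> m" for n m
  proof (cases "n < m")
    case True then show ?thesis by (rule disj_lt)
  next
    case False then have "m < n" using that by simp
    then show ?thesis using disj_lt[of m n] by (simp add: inf_commute)
  qed
  have gb: "blinfun_apply g (a (Suc n)) - blinfun_apply g (inf (a (Suc n)) ((4^n) *\<^sub>R (\<Sum>i\<le>n. a i)))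
            - (1/2)^n * blinfun_apply g x \<le> blinfun_apply g (y n)" if g: "pos_fun g" for g n
  proof -
    have "inf (a (Suc n)) (B n + C n) \<le> inf (a (Suc n)) (B n) + C n"
      by (rule inf_add_le[OF C0])
    then have "blinfun_apply g (inf (a (Suc n)) (B n + C n)) \<le> blinfun_apply g (inf (a (Suc n)) (B n) + C n)"
      by (rule pos_fun_le[OF g])
    then have "blinfun_apply g (inf (a (Suc n)) (B n + C n))
         \<le> blinfun_apply g (inf (a (Suc n)) (B n)) + (1/2)^n * blinfun_apply g x"
      by (simp add: C_def blinfun.add_right blinfun.scaleR_right)
    moreover have "blinfun_apply g (y n) = blinfun_apply g (a (Suc n)) - blinfun_apply g (inf (a (Suc n)) (B n + C n))"
      unfolding yeq by (rule blinfun.diff_right)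
    ultimately show ?thesis by (simp add: B_def S_def)
  qed
  show ?thesis using x0 y0 ya disj gb by blast
qed


lemma decomp:
  fixes \<phi> :: "'a::banach_lattice \<Rightarrow> real"
  assumes bl: "bounded_linear \<phi>"
  shows "\<exists>P Q. pos_fun P \<and> pos_fun Q \<and> (\<forall>x. \<phi> x = blinfun_apply P x - blinfun_apply Q x)"
proof -
  obtain K where K: "\<And>x. norm (\<phi> x) \<le> norm x * K" and K0: "0 \<le> K"
    using bounded_linear.nonneg_bounded[OF bl] by blast
  have lin: "linear \<phi>" using bl by (rule bounded_linear.linear)
  note ls = linear_add[OF lin] linear_scale[OF lin] linear_diff[OF lin] linear_0[OF lin]
  define I where "I x = {y::'a. 0 \<le> y \<and> y \<le> x}" for x
  define Pp where "Pp x = (SUP y\<in>I x. \<phi> y)" for x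
  have ne: "0 \<le> x \<Longrightarrow> I x \<noteq> {}" for x by (auto simp: I_def)
  have ub: "\<phi> y \<le> norm x * K" if "y \<in> I x" for x y
  proof -
    have "norm y \<le> norm x" using that by (auto simp: I_def intro: norm_mono_pos)
    then have "norm y * K \<le> norm x * K" using K0 by (rule mult_right_mono)
    moreover have "\<phi> y \<le> norm y * K" using K[of y] by simp
    ultimately show ?thesis by linarith
  qed
  have bdd: "bdd_above (\<phi> ` I x)" for x
    using ub by (intro bdd_aboveI2) blast
  have upper: "y \<in> I x \<Longrightarrow> \<phi> y \<le> Pp x" for x y
    unfolding Pp_def by (rule cSUP_upper[OF _ bdd])
  have least: "0 \<le> x \<Longrightarrow> (\<And>y. y \<in> I x \<Longrightarrow> \<phi> y \<le> m) \<Longrightarrow> Pp x \<le> m" for x m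
    unfolding Pp_def by (rule cSUP_least[OF ne])
  have add: "Pp (a + b) = Pp a + Pp b" if a: "0 \<le> a" and b: "0 \<le> b" for a b
  proof (rule antisym)
    show "Pp (a + b) \<le> Pp a + Pp b"
    proof (rule least)
      show "0 \<le> a + b" using a b by simp
      fix y assume y: "y \<in> I (a + b)"
      have y0: "0 \<le> y" and yab: "y \<le> a + b" using y by (auto simp: I_def)
      have "inf y a \<in> I a" using y0 a by (auto simp: I_def)
      moreover have "pprt (y - a) \<in> I b"
      proof -
        have "y - a \<le> b" using yab by (simp add: algebra_simps)
        then show ?thesis using b by (simp add: I_def pprt_def)
      qed
      moreover have "y = inf y a + pprt (y - a)" by (metis pprt_diff_inf add.commute diff_add_cancel)
      ultimately show "\<phi> y \<le> Pp a + Pp b"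
        by (metis add_mono ls(1) upper)
    qed
    show "Pp a + Pp b \<le> Pp (a + b)"
    proof -
      have "Pp a \<le> Pp (a + b) - Pp b"
      proof (rule least[OF a])
        fix y1 assume y1: "y1 \<in> I a"
        have "Pp b \<le> Pp (a + b) - \<phi> y1"
        proof (rule least[OF b])
          fix y2 assume y2: "y2 \<in> I b"
          have "y1 + y2 \<in> I (a + b)" using y1 y2 by (auto simp: I_def intro: add_mono)
          then have "\<phi> (y1 + y2) \<le> Pp (a + b)" by (rule upper)
          then show "\<phi> y2 \<le> Pp (a + b) - \<phi> y1" by (simp add: ls)
        qed
        then show "\<phi> y1 \<le> Pp (a + b) - Pp b" by simp
      qed
      then show ?thesis by simp
    qed
  qed
  have I0: "I 0 = {0}" by (auto simp: I_def)
  have P0: "Pp 0 = 0" unfolding Pp_def I0 by (simp add: ls)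
  have hom: "Pp (c *\<^sub>R x) = c * Pp x" if c: "0 \<le> c" and x: "0 \<le> x" for c x
  proof (cases "c = 0")
    case True then show ?thesis by (simp add: P0)
  next
    case False
    then have cp: "0 < c" using c by simp
    have cx: "0 \<le> c *\<^sub>R x" using c x by (simp add: scaleR_nonneg_nonneg)
    show ?thesis
    proof (rule antisym)
      show "Pp (c *\<^sub>R x) \<le> c * Pp x"
      proof (rule least[OF cx])
        fix y assume y: "y \<in> I (c *\<^sub>R x)"
        have "inverse c *\<^sub>R y \<in> I x"
        proof -
          have "0 \<le> inverse c *\<^sub>R y" using y cp by (simp add: I_def scaleR_nonneg_nonneg)
          moreover have "inverse c *\<^sub>R y \<le> inverse c *\<^sub>R (c *\<^sub>R x)"
            using y cp by (intro scaleR_left_mono) (simp_all add: I_def)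
          ultimately show ?thesis using cp by (simp add: I_def)
        qed
        then have "\<phi> (inverse c *\<^sub>R y) \<le> Pp x" by (rule upper)
        then have "c * \<phi> (inverse c *\<^sub>R y) \<le> c * Pp x" using c by (rule mult_left_mono)
        then show "\<phi> y \<le> c * Pp x" using cp by (simp add: ls field_simps)
      qed
      have "Pp x \<le> Pp (c *\<^sub>R x) / c"
      proof (rule least[OF x])
        fix y assume y: "y \<in> I x"
        have "c *\<^sub>R y \<in> I (c *\<^sub>R x)"
          using y c by (auto simp: I_def scaleR_nonneg_nonneg intro: scaleR_left_mono)
        then have "\<phi> (c *\<^sub>R y) \<le> Pp (c *\<^sub>R x)" by (rule upper)
        then show "\<phi> y \<le> Pp (c *\<^sub>R x) / c" using cp by (simp add: ls field_simps)
      qed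
      then show "c * Pp x \<le> Pp (c *\<^sub>R x)" using cp by (simp add: field_simps)
    qed
  qed
  have bnd: "Pp x \<le> K * norm x" if "0 \<le> x" for x
    using least[OF that ub] by (simp add: mult.commute)
  have nonneg: "0 \<le> Pp x" if "0 \<le> x" for x
    using upper[of 0 x] that by (simp add: I_def ls)
  obtain P where P: "pos_fun P" and Pe: "\<And>x. 0 \<le> x \<Longrightarrow> blinfun_apply P x = Pp x"
    using cone_extend[of Pp K, OF add hom bnd nonneg] by blast
  define Q where "Q = P - Blinfun \<phi>"
  have Qa: "blinfun_apply Q x = blinfun_apply P x - \<phi> x" for x
    unfolding Q_def using bl by (simp add: bounded_linear_Blinfun_apply blinfun.diff_left)
  have "pos_fun Q"
    unfolding pos_fun_def
  proof (intro allI impI)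
    fix x :: 'a assume x: "0 \<le> x"
    have "x \<in> I x" using x by (simp add: I_def)
    then have "\<phi> x \<le> Pp x" by (rule upper)
    then show "0 \<le> blinfun_apply Q x" using Qa Pe[OF x] by simp
  qed
  moreover have "\<forall>x. \<phi> x = blinfun_apply P x - blinfun_apply Q x" using Qa by simp
  ultimately show ?thesis using P by blast
qed


lemma pos_fun_norm: "blinfun_apply g x \<le> norm g * norm x"
  using norm_blinfun[of g x] by simp

lemma dir_inf_pointwise:
  fixes D :: "('a::banach_lattice \<Rightarrow>\<^sub>L real) set"
  assumes ne: "D \<noteq> {}" and dir: "\<forall>f\<in>D. \<forall>g\<in>D. \<exists>h\<in>D. dual_le h f \<and> dual_le h g"
    and pos: "\<forall>f\<in>D. dual_le 0 f" and inf0: "\<forall>h. (\<forall>f\<in>D. dual_le h f) \<longrightarrow> dual_le h 0"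
    and z: "0 \<le> z" and e: "0 < \<epsilon>"
  shows "\<exists>g\<in>D. blinfun_apply g z < \<epsilon>"
proof -
  define hh where "hh x = (INF g\<in>D. blinfun_apply g x)" for x
  have gpos: "g \<in> D \<Longrightarrow> 0 \<le> x \<Longrightarrow> 0 \<le> blinfun_apply g x" for g x
    using pos by (auto simp: dual_le_def)
  have bdd: "0 \<le> x \<Longrightarrow> bdd_below ((\<lambda>g. blinfun_apply g x) ` D)" for x
    using gpos by (intro bdd_belowI2) blast
  have lower: "g \<in> D \<Longrightarrow> 0 \<le> x \<Longrightarrow> hh x \<le> blinfun_apply g x" for g x
    unfolding hh_def by (rule cINF_lower[OF bdd])
  have greatest: "(\<And>g. g \<in> D \<Longrightarrow> m \<le> blinfun_apply g x) \<Longrightarrow> m \<le> hh x" for m x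
    unfolding hh_def by (rule cINF_greatest[OF ne])
  have less: "0 \<le> x \<Longrightarrow> hh x < a \<Longrightarrow> \<exists>g\<in>D. blinfun_apply g x < a" for x a
    unfolding hh_def using cINF_less_iff[OF ne bdd] by blast
  have dle: "dual_le h g \<Longrightarrow> 0 \<le> x \<Longrightarrow> blinfun_apply h x \<le> blinfun_apply g x" for h g x
    by (simp add: dual_le_def)
  have add: "hh (a + b) = hh a + hh b" if a: "0 \<le> a" and b: "0 \<le> b" for a b
  proof (rule antisym)
    show "hh (a + b) \<le> hh a + hh b"
    proof (rule field_le_epsilon)
      fix e :: real assume e: "0 < e"
      obtain g1 where g1: "g1 \<in> D" "blinfun_apply g1 a < hh a + e/2"
        using less[OF a, of "hh a + e/2"] e by auto
      obtain g2 where g2: "g2 \<in> D" "blinfun_apply g2 b < hh b + e/2"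
        using less[OF b, of "hh b + e/2"] e by auto
      obtain g3 where g3: "g3 \<in> D" "dual_le g3 g1" "dual_le g3 g2" using dir g1 g2 by blast
      have "hh (a + b) \<le> blinfun_apply g3 (a + b)" using lower[OF g3(1)] a b by simp
      also have "\<dots> = blinfun_apply g3 a + blinfun_apply g3 b" by (simp add: blinfun.add_right)
      also have "\<dots> \<le> blinfun_apply g1 a + blinfun_apply g2 b"
        using dle[OF g3(2) a] dle[OF g3(3) b] by simp
      finally show "hh (a + b) \<le> hh a + hh b + e" using g1 g2 by simp
    qed
    show "hh a + hh b \<le> hh (a + b)"
    proof (rule greatest)
      fix g assume g: "g \<in> D"
      have "hh a + hh b \<le> blinfun_apply g a + blinfun_apply g b"
        using lower[OF g a] lower[OF g b] by simp
      then show "hh a + hh b \<le> blinfun_apply g (a + b)" by (simp add: blinfun.add_right)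
    qed
  qed
  have hom: "hh (c *\<^sub>R x) = c * hh x" if c: "0 \<le> c" and x: "0 \<le> x" for c x
  proof (cases "c = 0")
    case True then show ?thesis using ne by (simp add: hh_def blinfun.zero_right)
  next
    case False
    then have cp: "0 < c" using c by simp
    have cx: "0 \<le> c *\<^sub>R x" using c x by (simp add: scaleR_nonneg_nonneg)
    show ?thesis
    proof (rule antisym)
      have "hh (c *\<^sub>R x) / c \<le> hh x"
      proof (rule greatest)
        fix g assume g: "g \<in> D"
        have "hh (c *\<^sub>R x) \<le> blinfun_apply g (c *\<^sub>R x)" by (rule lower[OF g cx])
        then show "hh (c *\<^sub>R x) / c \<le> blinfun_apply g x" using cp
          by (simp add: blinfun.scaleR_right field_simps)
      qed
      then show "hh (c *\<^sub>R x) \<le> c * hh x" using cp by (simp add: field_simps)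
      show "c * hh x \<le> hh (c *\<^sub>R x)"
      proof (rule greatest)
        fix g assume g: "g \<in> D"
        have "c * hh x \<le> c * blinfun_apply g x" using lower[OF g x] c by (rule mult_left_mono)
        then show "c * hh x \<le> blinfun_apply g (c *\<^sub>R x)" by (simp add: blinfun.scaleR_right)
      qed
    qed
  qed
  obtain g0 where g0: "g0 \<in> D" using ne by blast
  have bnd: "hh x \<le> norm g0 * norm x" if "0 \<le> x" for x
    using lower[OF g0 that] pos_fun_norm[of g0 x] by simp
  have nonneg: "0 \<le> hh x" if "0 \<le> x" for x
    using greatest[of 0 x] gpos that by blast
  obtain H where H: "pos_fun H" and He: "\<And>x. 0 \<le> x \<Longrightarrow> blinfun_apply H x = hh x"
    using cone_extend[of hh "norm g0", OF add hom bnd nonneg] by blast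
  have "\<forall>f\<in>D. dual_le H f"
    using lower He by (simp add: dual_le_def)
  then have "dual_le H 0" using inf0 by blast
  then have "hh z \<le> 0" using He[OF z] z unfolding dual_le_def by (metis blinfun.zero_left)
  then have "hh z < \<epsilon>" using e by simp
  then show ?thesis using less[OF z] by blast
qed

lemma dir_inf_below:
  fixes D :: "('a::banach_lattice \<Rightarrow>\<^sub>L real) set"
  assumes ne: "D \<noteq> {}" and dir: "\<forall>f\<in>D. \<forall>g\<in>D. \<exists>h\<in>D. dual_le h f \<and> dual_le h g"
    and pos: "\<forall>f\<in>D. dual_le 0 f" and inf0: "\<forall>h. (\<forall>f\<in>D. dual_le h f) \<longrightarrow> dual_le h 0"
    and z: "0 \<le> z" and e: "0 < \<epsilon>" and g: "g \<in> D"
  shows "\<exists>g'\<in>D. dual_le g' g \<and> blinfun_apply g' z < \<epsilon>"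
proof -
  obtain g1 where g1: "g1 \<in> D" "blinfun_apply g1 z < \<epsilon>"
    using dir_inf_pointwise[OF ne dir pos inf0 z e] by blast
  obtain g' where g': "g' \<in> D" "dual_le g' g" "dual_le g' g1" using dir g g1 by blast
  have "blinfun_apply g' z \<le> blinfun_apply g1 z" using g'(3) z by (simp add: dual_le_def)
  then show ?thesis using g' g1 by force
qed


definition compf :: "('a::banach_lattice \<Rightarrow>\<^sub>L real) \<Rightarrow> 'a \<Rightarrow> 'a \<Rightarrow> real" where
  "compf f v x = (SUP k::nat. blinfun_apply f (inf x (real k *\<^sub>R v)))"

lemma inf_scale_mono:
  fixes v :: "'a::banach_lattice"
  assumes "0 \<le> v" "0 \<le> s" "s \<le> t"
  shows "inf x (s *\<^sub>R v) \<le> inf x (t *\<^sub>R v)"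
  using assms by (meson inf_mono order_refl scaleR_right_mono)

context
  fixes f :: "'a::banach_lattice \<Rightarrow>\<^sub>L real" and v :: 'a
  assumes f: "pos_fun f" and v: "0 \<le> v"
begin

private abbreviation "F \<equiv> blinfun_apply f"

lemma cf_mono: "0 \<le> s \<Longrightarrow> s \<le> t \<Longrightarrow> F (inf x (s *\<^sub>R v)) \<le> F (inf x (t *\<^sub>R v))"
  by (rule pos_fun_le[OF f]) (rule inf_scale_mono[OF v])

lemma cf_le_f: "F (inf x (t *\<^sub>R v)) \<le> F x"
  by (rule pos_fun_le[OF f]) simp

lemma cf_bdd: "bdd_above (range (\<lambda>k::nat. F (inf x (real k *\<^sub>R v))))"
  using cf_le_f by (intro bdd_aboveI2) blast

lemma cf_upper: "0 \<le> t \<Longrightarrow> F (inf x (t *\<^sub>R v)) \<le> compf f v x"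
proof -
  assume t: "0 \<le> t"
  have "F (inf x (t *\<^sub>R v)) \<le> F (inf x (real (nat \<lceil>t\<rceil>) *\<^sub>R v))"
    by (rule cf_mono[OF t]) linarith
  also have "\<dots> \<le> compf f v x" unfolding compf_def by (rule cSUP_upper[OF _ cf_bdd]) simp
  finally show ?thesis .
qed

lemma cf_least: "(\<And>k::nat. F (inf x (real k *\<^sub>R v)) \<le> m) \<Longrightarrow> compf f v x \<le> m"
  unfolding compf_def by (rule cSUP_least) auto

lemma cf_lim: "(\<lambda>k. F (inf x (real k *\<^sub>R v))) \<longlonglongrightarrow> compf f v x"
  unfolding compf_def
proof (rule LIMSEQ_incseq_SUP[OF cf_bdd])
  show "incseq (\<lambda>k. F (inf x (real k *\<^sub>R v)))"
    by (rule incseq_SucI) (rule cf_mono, simp_all)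
qed

lemma cf_add: "0 \<le> a \<Longrightarrow> 0 \<le> b \<Longrightarrow> compf f v (a + b) = compf f v a + compf f v b"
proof -
  assume a: "0 \<le> a" and b: "0 \<le> b"
  show ?thesis
  proof (rule antisym)
    show "compf f v (a + b) \<le> compf f v a + compf f v b"
    proof (rule cf_least)
      fix k :: nat
      have kv: "0 \<le> real k *\<^sub>R v" using v by (simp add: scaleR_nonneg_nonneg)
      have "F (inf (a + b) (real k *\<^sub>R v)) \<le> F (inf a (real k *\<^sub>R v) + inf b (real k *\<^sub>R v))"
        by (rule pos_fun_le[OF f]) (rule inf_add_le2[OF a b kv])
      also have "\<dots> = F (inf a (real k *\<^sub>R v)) + F (inf b (real k *\<^sub>R v))" by (simp add: blinfun.add_right)
      also have "\<dots> \<le> compf f v a + compf f v b" using cf_upper[of "real k" a] cf_upper[of "real k" b] by simp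
      finally show "F (inf (a + b) (real k *\<^sub>R v)) \<le> compf f v a + compf f v b" .
    qed
    have "(\<lambda>k. F (inf a (real k *\<^sub>R v)) + F (inf b (real k *\<^sub>R v))) \<longlonglongrightarrow> compf f v a + compf f v b"
      by (intro tendsto_add cf_lim)
    moreover have "F (inf a (real k *\<^sub>R v)) + F (inf b (real k *\<^sub>R v)) \<le> compf f v (a + b)" for k
    proof -
      have "inf a (real k *\<^sub>R v) + inf b (real k *\<^sub>R v) \<le> inf (a + b) ((2 * real k) *\<^sub>R v)"
      proof (rule le_infI)
        show "inf a (real k *\<^sub>R v) + inf b (real k *\<^sub>R v) \<le> a + b" by (intro add_mono) simp_all
        have "(2 * real k) *\<^sub>R v = real k *\<^sub>R v + real k *\<^sub>R v" by (simp add: scaleR_add_left[symmetric])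
        then show "inf a (real k *\<^sub>R v) + inf b (real k *\<^sub>R v) \<le> (2 * real k) *\<^sub>R v"
          by (simp add: add_mono)
      qed
      then have "F (inf a (real k *\<^sub>R v) + inf b (real k *\<^sub>R v)) \<le> F (inf (a + b) ((2 * real k) *\<^sub>R v))"
        by (rule pos_fun_le[OF f])
      also have "\<dots> \<le> compf f v (a + b)" by (rule cf_upper) simp
      finally show ?thesis by (simp add: blinfun.add_right)
    qed
    ultimately show "compf f v a + compf f v b \<le> compf f v (a + b)"
      by (intro LIMSEQ_le_const2) auto
  qed
qed

lemma cf_zero: "compf f v 0 = 0"
proof -
  have "inf 0 (real k *\<^sub>R v) = 0" for k :: nat
    using v by (simp add: inf_absorb1 scaleR_nonneg_nonneg)
  then show ?thesis by (simp add: compf_def blinfun.zero_right)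
qed

lemma cf_hom: "0 \<le> c \<Longrightarrow> 0 \<le> x \<Longrightarrow> compf f v (c *\<^sub>R x) = c * compf f v x"
proof -
  assume c: "0 \<le> c" and x: "0 \<le> x"
  show ?thesis
  proof (cases "c = 0")
    case True then show ?thesis by (simp add: cf_zero)
  next
    case False
    then have cp: "0 < c" using c by simp
    have eq: "inf (c *\<^sub>R x) (t *\<^sub>R v) = c *\<^sub>R inf x ((t / c) *\<^sub>R v)" for t
      using scaleR_inf[OF c, of x "(t / c) *\<^sub>R v"] cp by simp
    show ?thesis
    proof (rule antisym)
      show "compf f v (c *\<^sub>R x) \<le> c * compf f v x"
      proof (rule cf_least)
        fix k :: nat
        have "F (inf (c *\<^sub>R x) (real k *\<^sub>R v)) = c * F (inf x ((real k / c) *\<^sub>R v))"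
          by (simp add: eq blinfun.scaleR_right)
        also have "\<dots> \<le> c * compf f v x"
          using cp by (intro mult_left_mono cf_upper) simp_all
        finally show "F (inf (c *\<^sub>R x) (real k *\<^sub>R v)) \<le> c * compf f v x" .
      qed
      have "compf f v x \<le> compf f v (c *\<^sub>R x) / c"
      proof (rule cf_least)
        fix k :: nat
        have "F (inf (c *\<^sub>R x) ((c * real k) *\<^sub>R v)) = c * F (inf x (real k *\<^sub>R v))"
          using cp by (simp add: eq blinfun.scaleR_right)
        moreover have "F (inf (c *\<^sub>R x) ((c * real k) *\<^sub>R v)) \<le> compf f v (c *\<^sub>R x)"
          using cp by (intro cf_upper) simp
        ultimately show "F (inf x (real k *\<^sub>R v)) \<le> compf f v (c *\<^sub>R x) / c"
          using cp by (simp add: field_simps)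
      qed
      then show "c * compf f v x \<le> compf f v (c *\<^sub>R x)" using cp by (simp add: field_simps)
    qed
  qed
qed

lemma cf_le: "compf f v x \<le> F x"
  by (rule cf_least) (rule cf_le_f)

lemma cf_nonneg: "0 \<le> x \<Longrightarrow> 0 \<le> compf f v x"
proof -
  assume x: "0 \<le> x"
  have "F (inf x (0 *\<^sub>R v)) \<le> compf f v x" by (rule cf_upper) simp
  moreover have "inf x (0 *\<^sub>R v) = 0" using x by (simp add: inf_absorb2)
  ultimately show ?thesis by (simp add: blinfun.zero_right)
qed

lemma cf_self: "compf f v v = F v"
proof (rule antisym)
  show "compf f v v \<le> F v" by (rule cf_le)
  have "F (inf v (1 *\<^sub>R v)) \<le> compf f v v" by (rule cf_upper) simp
  then show "F v \<le> compf f v v" by simp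
qed

lemma cf_exists: "\<exists>G. pos_fun G \<and> (\<forall>x. 0 \<le> x \<longrightarrow> blinfun_apply G x = compf f v x)"
proof (rule cone_extend[of _ "norm f"])
  show "compf f v (x + y) = compf f v x + compf f v y" if "0 \<le> x" "0 \<le> y" for x y
    using cf_add that by simp
  show "compf f v (c *\<^sub>R x) = c * compf f v x" if "0 \<le> c" "0 \<le> x" for c x
    using cf_hom that by simp
  show "compf f v x \<le> norm f * norm x" if "0 \<le> x" for x
    using cf_le[of x] pos_fun_norm[of f x] by simp
  show "0 \<le> compf f v x" if "0 \<le> x" for x using cf_nonneg that by simp
qed

end

definition bcomp :: "('a::banach_lattice \<Rightarrow>\<^sub>L real) \<Rightarrow> 'a \<Rightarrow> ('a \<Rightarrow>\<^sub>L real)" where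
  "bcomp f v = (SOME G. pos_fun G \<and> (\<forall>x. 0 \<le> x \<longrightarrow> blinfun_apply G x = compf f v x))"

lemma comp_props:
  assumes "pos_fun f" "0 \<le> v"
  shows "pos_fun (bcomp f v)" "\<And>x. 0 \<le> x \<Longrightarrow> blinfun_apply (bcomp f v) x = compf f v x"
  using someI_ex[OF cf_exists[OF assms]] unfolding bcomp_def by auto

lemma comp_sum_le:
  fixes z :: "nat \<Rightarrow> 'a::banach_lattice"
  assumes f: "pos_fun f" and zpos: "\<And>n. 0 \<le> z n"
    and disj: "\<And>n m. n \<noteq> m \<Longrightarrow> inf (z n) (z m) = 0"
    and fin: "finite P" and x: "0 \<le> x"
  shows "(\<Sum>n\<in>P. blinfun_apply (bcomp f (z n)) x) \<le> blinfun_apply f x"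
proof -
  have "(\<lambda>k. \<Sum>n\<in>P. blinfun_apply f (inf x (real k *\<^sub>R z n))) \<longlonglongrightarrow> (\<Sum>n\<in>P. compf f (z n) x)"
    by (intro tendsto_sum cf_lim[OF f zpos])
  moreover have "(\<Sum>n\<in>P. blinfun_apply f (inf x (real k *\<^sub>R z n))) \<le> blinfun_apply f x" for k :: nat
  proof -
    have "(\<Sum>n\<in>P. inf x (real k *\<^sub>R z n)) \<le> x"
    proof (rule disj_sum_le[OF fin])
      show "0 \<le> inf x (real k *\<^sub>R z n)" for n using x zpos[of n] by (simp add: scaleR_nonneg_nonneg)
      show "inf x (real k *\<^sub>R z n) \<le> x" for n by simp
      show "0 \<le> x" by (rule x)
      fix i j :: nat assume "i \<noteq> j"
      have "inf (inf x (real k *\<^sub>R z i)) (inf x (real k *\<^sub>R z j)) \<le> inf (real k *\<^sub>R z i) (real k *\<^sub>R z j)"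
        by (meson inf.cobounded2 inf_mono)
      also have "\<dots> = real k *\<^sub>R inf (z i) (z j)" by (rule scaleR_inf[symmetric]) simp
      also have "\<dots> = 0" using disj[OF \<open>i \<noteq> j\<close>] by simp
      finally show "inf (inf x (real k *\<^sub>R z i)) (inf x (real k *\<^sub>R z j)) = 0"
        using x zpos[of i] zpos[of j] by (simp add: antisym scaleR_nonneg_nonneg)
    qed
    then have "blinfun_apply f (\<Sum>n\<in>P. inf x (real k *\<^sub>R z n)) \<le> blinfun_apply f x"
      by (rule pos_fun_le[OF f])
    then show ?thesis by (simp add: blinfun.sum_right)
  qed
  ultimately have "(\<Sum>n\<in>P. compf f (z n) x) \<le> blinfun_apply f x"
    by (intro LIMSEQ_le_const2) auto
  moreover have "(\<Sum>n\<in>P. blinfun_apply (bcomp f (z n)) x) = (\<Sum>n\<in>P. compf f (z n) x)"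
    using comp_props(2)[OF f zpos x] by simp
  ultimately show ?thesis by simp
qed


lemma oc_disj_null:
  fixes y :: "nat \<Rightarrow> 'a::banach_lattice" and E :: "'a itself"
  assumes oc: "dual_order_continuous_norm E"
    and f: "pos_fun f" and ypos: "\<And>n. 0 \<le> y n"
    and disj: "\<And>n m. n \<noteq> m \<Longrightarrow> inf (y n) (y m) = 0"
    and bnd: "\<And>n. norm (y n) \<le> M"
  shows "(\<lambda>n. blinfun_apply f (y n)) \<longlonglongrightarrow> 0"
proof -
  define c where "c n x = blinfun_apply (bcomp f (y n)) x" for n x
  have cpos: "0 \<le> x \<Longrightarrow> 0 \<le> c n x" for n x
    using comp_props(1)[OF f ypos] by (simp add: c_def pos_fun_def)
  have csum: "0 \<le> x \<Longrightarrow> (\<Sum>n<k. c n x) \<le> blinfun_apply f x" for k x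
    unfolding c_def by (rule comp_sum_le[OF f ypos disj]) simp_all
  have sc: "0 \<le> x \<Longrightarrow> summable (\<lambda>n. c n x)" for x
    by (rule summableI_nonneg_bounded[where x="blinfun_apply f x"]) (simp_all add: cpos csum)
  have sle: "0 \<le> x \<Longrightarrow> (\<Sum>n. c n x) \<le> blinfun_apply f x" for x
    by (rule suminf_le_const[OF sc]) (simp_all add: csum)
  define GN where "GN N x = (\<Sum>n. c (n + N) x)" for N x
  have GNeq: "0 \<le> x \<Longrightarrow> GN N x = (\<Sum>n. c n x) - (\<Sum>i<N. c i x)" for N x
    unfolding GN_def by (rule suminf_minus_initial_segment[OF sc])
  have sN: "0 \<le> x \<Longrightarrow> summable (\<lambda>n. c (n + N) x)" for N x
    by (rule summable_ignore_initial_segment[OF sc])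
  have cadd: "c n (a + b) = c n a + c n b" for n a b by (simp add: c_def blinfun.add_right)
  have cscale: "c n (r *\<^sub>R a) = r * c n a" for n r a by (simp add: c_def blinfun.scaleR_right)
  have GNadd: "0 \<le> a \<Longrightarrow> 0 \<le> b \<Longrightarrow> GN N (a + b) = GN N a + GN N b" for N a b
    unfolding GN_def cadd by (rule suminf_add[OF sN sN, symmetric])
  have GNhom: "0 \<le> r \<Longrightarrow> 0 \<le> a \<Longrightarrow> GN N (r *\<^sub>R a) = r * GN N a" for N r a
    unfolding GN_def cscale by (rule suminf_mult[OF sN])
  have GNnonneg: "0 \<le> a \<Longrightarrow> 0 \<le> GN N a" for N a
    unfolding GN_def using cpos by (intro suminf_nonneg[OF sN]) simp_all
  have GNle: "0 \<le> a \<Longrightarrow> GN N a \<le> blinfun_apply f a" for N a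
  proof -
    assume a: "0 \<le> a"
    have "0 \<le> (\<Sum>i<N. c i a)" using cpos[OF a] by (simp add: sum_nonneg)
    then show ?thesis using GNeq[OF a, of N] sle[OF a] by simp
  qed
  have GNbnd: "0 \<le> a \<Longrightarrow> GN N a \<le> norm f * norm a" for N a
    using GNle pos_fun_norm[of f] order_trans by blast
  have exG: "\<exists>G. pos_fun G \<and> (\<forall>x. 0 \<le> x \<longrightarrow> blinfun_apply G x = GN N x)" for N
    by (rule cone_extend[of _ "norm f"]) (simp_all add: GNadd GNhom GNbnd GNnonneg)
  define GG where "GG N = (SOME G. pos_fun G \<and> (\<forall>x. 0 \<le> x \<longrightarrow> blinfun_apply G x = GN N x))" for N
  have GGp: "pos_fun (GG N)" and GGe: "0 \<le> x \<Longrightarrow> blinfun_apply (GG N) x = GN N x" for N x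
    using someI_ex[OF exG[of N]] unfolding GG_def by auto
  have GNmono: "0 \<le> x \<Longrightarrow> N \<le> K \<Longrightarrow> GN K x \<le> GN N x" for N K x
  proof -
    assume x: "0 \<le> x" and NK: "N \<le> K"
    have "(\<Sum>i<N. c i x) \<le> (\<Sum>i<K. c i x)"
      by (rule sum_mono2) (use NK cpos[OF x] in auto)
    then show ?thesis using GNeq[OF x, of N] GNeq[OF x, of K] by simp
  qed
  have GNterm: "0 \<le> x \<Longrightarrow> N \<le> n \<Longrightarrow> c n x \<le> GN N x" for N n x
  proof -
    assume x: "0 \<le> x" and Nn: "N \<le> n"
    have "(\<Sum>i\<in>{..<N} \<union> {n}. c i x) \<le> (\<Sum>i<Suc n. c i x)"
      by (rule sum_mono2) (use Nn cpos[OF x] in auto)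
    moreover have "(\<Sum>i\<in>{..<N} \<union> {n}. c i x) = (\<Sum>i<N. c i x) + c n x"
      using Nn by (subst sum.union_disjoint) auto
    moreover have "(\<Sum>i<Suc n. c i x) \<le> (\<Sum>i. c i x)"
      by (rule sum_le_suminf[OF sc[OF x]]) (simp_all add: cpos[OF x])
    ultimately show ?thesis using GNeq[OF x, of N] by simp
  qed
  have GNlim: "0 \<le> x \<Longrightarrow> (\<lambda>N. GN N x) \<longlonglongrightarrow> 0" for x
  proof -
    assume x: "0 \<le> x"
    have "(\<lambda>N. (\<Sum>n. c n x) - (\<Sum>i<N. c i x)) \<longlonglongrightarrow> (\<Sum>n. c n x) - (\<Sum>n. c n x)"
      by (intro tendsto_diff tendsto_const summable_LIMSEQ[OF sc[OF x]])
    then show ?thesis using GNeq[OF x] by simp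
  qed
  define D where "D = range GG"
  have "\<forall>\<epsilon>>0. \<exists>g\<in>D. norm g < \<epsilon>"
  proof -
    have "D \<noteq> {}" by (simp add: D_def)
    moreover have "\<forall>g1\<in>D. \<forall>g2\<in>D. \<exists>h\<in>D. dual_le h g1 \<and> dual_le h g2"
    proof (intro ballI)
      fix g1 g2 assume "g1 \<in> D" "g2 \<in> D"
      then obtain N1 N2 where g: "g1 = GG N1" "g2 = GG N2" by (auto simp: D_def)
      have "dual_le (GG (max N1 N2)) g1 \<and> dual_le (GG (max N1 N2)) g2"
        unfolding g dual_le_def using GGe GNmono by simp
      then show "\<exists>h\<in>D. dual_le h g1 \<and> dual_le h g2" by (auto simp: D_def)
    qed
    moreover have "\<forall>g\<in>D. dual_le 0 g" using GGp by (auto simp: D_def pos_fun_dual)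
    moreover have "\<forall>h. (\<forall>g\<in>D. dual_le h g) \<longrightarrow> dual_le h 0"
    proof (intro allI impI)
      fix h assume h: "\<forall>g\<in>D. dual_le h g"
      show "dual_le h 0" unfolding dual_le_def
      proof (intro allI impI)
        fix x :: 'a assume x: "0 \<le> x"
        have "blinfun_apply h x \<le> GN N x" for N
        proof -
          have "dual_le h (GG N)" using h by (simp add: D_def)
          then have "blinfun_apply h x \<le> blinfun_apply (GG N) x" unfolding dual_le_def using x by blast
          then show ?thesis using GGe[OF x, of N] by simp
        qed
        then have "blinfun_apply h x \<le> 0"
          by (intro LIMSEQ_le_const[OF GNlim[OF x]]) auto
        then show "blinfun_apply h x \<le> blinfun_apply 0 x" by simp
      qed
    qed
    ultimately show ?thesis using oc unfolding dual_order_continuous_norm_def by blast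
  qed
  then have small: "\<exists>N. norm (GG N) < e" if "0 < e" for e using that by (auto simp: D_def)
  have M0: "0 \<le> M" using bnd[of 0] norm_ge_zero order_trans by blast
  show ?thesis
    unfolding LIMSEQ_iff
  proof (intro allI impI)
    fix r :: real assume r: "0 < r"
    obtain N where N: "norm (GG N) < r / (M + 1)" using small[of "r / (M + 1)"] r M0 by auto
    have "norm (blinfun_apply f (y n) - 0) < r" if n: "N \<le> n" for n
    proof -
      have fy: "blinfun_apply f (y n) = c n (y n)"
        unfolding c_def using comp_props(2)[OF f ypos ypos] cf_self[OF f ypos] by simp
      have "0 \<le> blinfun_apply f (y n)" using f ypos by (simp add: pos_fun_def)
      moreover have "c n (y n) \<le> GN N (y n)" by (rule GNterm[OF ypos n])
      moreover have "GN N (y n) = blinfun_apply (GG N) (y n)" using GGe[OF ypos] by simp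
      moreover have "blinfun_apply (GG N) (y n) \<le> norm (GG N) * norm (y n)" by (rule pos_fun_norm)
      moreover have "norm (GG N) * norm (y n) \<le> r / (M + 1) * M"
        using N bnd[of n] r M0 by (intro mult_mono) simp_all
      moreover have "r / (M + 1) * M < r" using r M0 by (simp add: field_simps)
      ultimately show ?thesis using fy by simp
    qed
    then show "\<exists>no. \<forall>n\<ge>no. norm (blinfun_apply f (y n) - 0) < r" by blast
  qed
qed


lemma oc_C:
  fixes x :: "nat \<Rightarrow> 'a::banach_lattice" and E :: "'a itself"
  assumes oc: "dual_order_continuous_norm E"
    and f: "pos_fun f" and xpos: "\<And>k. 0 \<le> x k" and bnd: "\<And>k. norm (x k) \<le> M"
    and hyp: "\<And>v. 0 \<le> v \<Longrightarrow> (\<lambda>k. blinfun_apply f (inf (x k) v)) \<longlonglongrightarrow> 0"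
  shows "(\<lambda>k. blinfun_apply f (x k)) \<longlonglongrightarrow> 0"
proof (rule ccontr)
  let ?F = "blinfun_apply f"
  assume "\<not> (\<lambda>k. ?F (x k)) \<longlonglongrightarrow> 0"
  then obtain \<delta> where d: "0 < \<delta>" and fr: "\<forall>N. \<exists>k\<ge>N. \<not> norm (?F (x k) - 0) < \<delta>"
    unfolding LIMSEQ_iff by blast
  have freq: "\<exists>k\<ge>N. \<delta> \<le> ?F (x k)" for N
  proof -
    obtain k where k: "k \<ge> N" "\<not> norm (?F (x k) - 0) < \<delta>" using fr by blast
    have "0 \<le> ?F (x k)" using f xpos by (simp add: pos_fun_def)
    then have "\<delta> \<le> ?F (x k)" using k(2) by simp
    then show ?thesis using k(1) by blast
  qed
  have exnxt: "\<exists>a. (\<exists>k. a = x k) \<and> \<delta> \<le> ?F a \<and> ?F (inf a ((4::real)^n *\<^sub>R S)) < \<delta>/4"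
    if S: "0 \<le> S" for n S
  proof -
    have "0 \<le> (4::real)^n *\<^sub>R S" using S by (simp add: scaleR_nonneg_nonneg)
    have d4: "0 < \<delta>/4" using d by simp
    obtain N where N0: "\<forall>k\<ge>N. norm (?F (inf (x k) ((4::real)^n *\<^sub>R S)) - 0) < \<delta>/4"
      using hyp[OF \<open>0 \<le> (4::real)^n *\<^sub>R S\<close>, unfolded LIMSEQ_iff] d4 by blast
    have N: "?F (inf (x k) ((4::real)^n *\<^sub>R S)) < \<delta>/4" if "N \<le> k" for k
      using N0 that by fastforce
    obtain k where k: "N \<le> k" "\<delta> \<le> ?F (x k)" using freq by blast
    show ?thesis using N[OF k(1)] k(2) by blast
  qed
  define nxt where "nxt n S = (SOME a. (\<exists>k. a = x k) \<and> \<delta> \<le> ?F a \<and> ?F (inf a ((4::real)^n *\<^sub>R S)) < \<delta>/4)" for n S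
  have nxt: "0 \<le> S \<Longrightarrow> (\<exists>k. nxt n S = x k) \<and> \<delta> \<le> ?F (nxt n S) \<and> ?F (inf (nxt n S) ((4::real)^n *\<^sub>R S)) < \<delta>/4" for n S
    unfolding nxt_def by (rule someI_ex) (rule exnxt)
  obtain k0 where k0: "\<delta> \<le> ?F (x k0)" using freq by blast
  define A where "A = rec_nat (x k0, x k0) (\<lambda>n p. (nxt n (snd p), snd p + nxt n (snd p)))"
  have A0: "A 0 = (x k0, x k0)" and AS: "A (Suc n) = (nxt n (snd (A n)), snd (A n) + nxt n (snd (A n)))" for n
    by (simp_all add: A_def)
  define a where "a n = fst (A n)" for n
  have inv: "snd (A n) = (\<Sum>i\<le>n. a i) \<and> (\<forall>i\<le>n. \<exists>k. a i = x k)" for n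
  proof (induction n)
    case 0 then show ?case by (auto simp: A0 a_def)
  next
    case (Suc n)
    have S0: "0 \<le> snd (A n)" using Suc xpos by (auto intro!: sum_nonneg)
    have an: "a (Suc n) = nxt n (snd (A n))" by (simp add: a_def AS)
    have "\<exists>k. a (Suc n) = x k" using nxt[OF S0] an by simp
    then have "\<forall>i\<le>Suc n. \<exists>k. a i = x k" using Suc by (auto simp: le_Suc_eq)
    moreover have "snd (A (Suc n)) = (\<Sum>i\<le>Suc n. a i)" using Suc an by (simp add: AS)
    ultimately show ?case by simp
  qed
  have apos: "0 \<le> a n" for n using inv[of n] xpos by auto
  have abnd: "norm (a n) \<le> M" for n using inv[of n] bnd by auto
  have Spos: "0 \<le> snd (A n)" for n using inv[of n] apos by (simp add: sum_nonneg)
  have ad: "\<delta> \<le> ?F (a n)" for n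
  proof (cases n)
    case 0 then show ?thesis using k0 by (simp add: a_def A0)
  next
    case (Suc m) then show ?thesis using nxt[OF Spos[of m]] by (simp add: a_def AS)
  qed
  have asmall: "?F (inf (a (Suc n)) ((4::real)^n *\<^sub>R (\<Sum>i\<le>n. a i))) < \<delta>/4" for n
    using nxt[OF Spos[of n]] inv[of n] by (simp add: a_def AS)
  obtain x0 y where x0: "0 \<le> x0" and y0: "\<forall>n. 0 \<le> y n \<and> y n \<le> a (Suc n)"
    and ydisj0: "\<forall>n m. n \<noteq> m \<longrightarrow> inf (y n) (y m) = 0"
    and yg0: "\<forall>g. pos_fun g \<longrightarrow> (\<forall>n. blinfun_apply g (a (Suc n))
            - blinfun_apply g (inf (a (Suc n)) ((4^n) *\<^sub>R (\<Sum>i\<le>n. a i)))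
            - (1/2)^n * blinfun_apply g x0 \<le> blinfun_apply g (y n))"
    using disjointify[of a M, OF apos abnd] by (elim exE conjE) (rule that)
  have y: "0 \<le> y n \<and> y n \<le> a (Suc n)" for n using y0 by blast
  have ydisj: "n \<noteq> m \<Longrightarrow> inf (y n) (y m) = 0" for n m using ydisj0 by blast
  have yg: "blinfun_apply g (a (Suc n))
            - blinfun_apply g (inf (a (Suc n)) ((4^n) *\<^sub>R (\<Sum>i\<le>n. a i)))
            - (1/2)^n * blinfun_apply g x0 \<le> blinfun_apply g (y n)" if "pos_fun g" for g n
    using yg0 that by blast
  have ybnd: "norm (y n) \<le> M" for n
    using norm_mono_pos[of "y n" "a (Suc n)"] y[of n] abnd[of "Suc n"] by simp
  have "(\<lambda>n. ?F (y n)) \<longlonglongrightarrow> 0"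
    by (rule oc_disj_null[OF oc f _ ydisj ybnd]) (use y in blast)
  moreover have "(\<lambda>n. (1/2::real)^n * ?F x0) \<longlonglongrightarrow> 0"
    by (intro tendsto_mult_left_zero LIMSEQ_power_zero) simp
  ultimately have "(\<lambda>n. ?F (y n) + (1/2::real)^n * ?F x0) \<longlonglongrightarrow> 0 + 0"
    by (rule tendsto_add)
  moreover have "3 * \<delta> / 4 \<le> ?F (y n) + (1/2::real)^n * ?F x0" for n
    using yg[OF f, of n] ad[of "Suc n"] asmall[of n] by simp
  ultimately have "3 * \<delta> / 4 \<le> 0" by (intro LIMSEQ_le_const) auto
  then show False using d by simp
qed


lemma oc_uaw_weak:
  fixes x :: "nat \<Rightarrow> 'a::banach_lattice" and E :: "'a itself"
  assumes oc: "dual_order_continuous_norm E"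
    and bd: "bounded (range x)" and uaw: "uaw_convergent x 0"
  shows "weakly_null x"
  unfolding weakly_null_def
proof (intro allI impI)
  fix \<phi> :: "'a \<Rightarrow> real" assume bl: "bounded_linear \<phi>"
  obtain M where M: "\<And>k. norm (x k) \<le> M" using bd unfolding bounded_iff by blast
  have posnull: "(\<lambda>k. blinfun_apply P (x k)) \<longlonglongrightarrow> 0" if P: "pos_fun P" for P
  proof -
    have "(\<lambda>k. blinfun_apply P (labs (x k))) \<longlonglongrightarrow> 0"
    proof (rule oc_C[OF oc P])
      show "0 \<le> labs (x k)" for k by (simp add: labs_def bl_abs_nonneg)
      show "norm (labs (x k)) \<le> M" for k using M by simp
      fix v :: 'a assume v: "0 \<le> v"
      have "\<forall>u. 0 \<le> u \<longrightarrow> weakly_null (\<lambda>n. inf (labs (x n - 0)) u)"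
        using uaw by (simp only: uaw_convergent_def)
      then have wn: "weakly_null (\<lambda>n. inf (labs (x n - 0)) v)" using v by blast
      have "(\<lambda>n. blinfun_apply P (inf (labs (x n - 0)) v)) \<longlonglongrightarrow> 0"
        using wn[unfolded weakly_null_def, rule_format, OF blinfun.bounded_linear_right] .
      then show "(\<lambda>k. blinfun_apply P (inf (labs (x k)) v)) \<longlonglongrightarrow> 0" by simp
    qed
    moreover have "eventually (\<lambda>k. norm (blinfun_apply P (x k)) \<le> blinfun_apply P (labs (x k))) sequentially"
    proof (rule always_eventually, rule allI)
      fix k show "norm (blinfun_apply P (x k)) \<le> blinfun_apply P (labs (x k))"
        using pos_fun_abs[OF P, of "x k"] by simp
    qed
    ultimately show ?thesis by (metis Lim_null_comparison)
  qed
  obtain P Q where P: "pos_fun P" and Q: "pos_fun Q" and PQ: "\<And>x. \<phi> x = blinfun_apply P x - blinfun_apply Q x"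
    using decomp[OF bl] by blast
  have "(\<lambda>k. blinfun_apply P (x k) - blinfun_apply Q (x k)) \<longlonglongrightarrow> 0 - 0"
    by (intro tendsto_diff posnull P Q)
  then show "(\<lambda>n. \<phi> (x n)) \<longlonglongrightarrow> 0" by (simp add: PQ)
qed


lemma big_norm_witness:
  fixes g :: "'a::banach_lattice \<Rightarrow>\<^sub>L real"
  assumes g: "pos_fun g" and e: "0 < e" and ng: "e \<le> norm g"
  shows "\<exists>a. 0 \<le> a \<and> norm a \<le> 1 \<and> e / 2 < blinfun_apply g a"
proof (rule ccontr)
  assume "\<not> ?thesis"
  then have H: "\<And>a. 0 \<le> a \<Longrightarrow> norm a \<le> 1 \<Longrightarrow> blinfun_apply g a \<le> e / 2" by (meson not_less)
  have "norm g \<le> e / 2"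
  proof (rule norm_blinfun_bound)
    show "0 \<le> e / 2" using e by simp
    fix x :: 'a
    show "norm (blinfun_apply g x) \<le> e / 2 * norm x"
    proof (cases "x = 0")
      case True then show ?thesis by simp
    next
      case False
      then have nx: "0 < norm x" by simp
      define b where "b = inverse (norm x) *\<^sub>R labs x"
      have b0: "0 \<le> b" unfolding b_def using nx
        by (simp add: scaleR_nonneg_nonneg labs_def bl_abs_nonneg)
      have "norm b = 1" unfolding b_def using nx by simp
      then have "blinfun_apply g b \<le> e / 2" using H[OF b0] by simp
      then have "inverse (norm x) * blinfun_apply g (labs x) \<le> e / 2"
        by (simp add: b_def blinfun.scaleR_right)
      then have "blinfun_apply g (labs x) \<le> e / 2 * norm x" using nx by (simp add: field_simps)
      moreover have "norm (blinfun_apply g x) \<le> blinfun_apply g (labs x)"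
        using pos_fun_abs[OF g, of x] by simp
      ultimately show ?thesis by simp
    qed
  qed
  then show False using ng e by simp
qed

lemma not_oc_seq:
  fixes E :: "'a::banach_lattice itself"
  assumes "\<not> dual_order_continuous_norm E"
  shows "\<exists>(f::'a \<Rightarrow>\<^sub>L real) (y::nat \<Rightarrow> 'a) \<delta>. pos_fun f \<and> 0 < \<delta> \<and> (\<forall>n. 0 \<le> y n \<and> norm (y n) \<le> 1 \<and> \<delta> \<le> blinfun_apply f (y n))
      \<and> (\<forall>n m. n \<noteq> m \<longrightarrow> inf (y n) (y m) = 0)"
proof -
  obtain D :: "('a \<Rightarrow>\<^sub>L real) set" where ne: "D \<noteq> {}"
    and dir: "\<forall>f\<in>D. \<forall>g\<in>D. \<exists>h\<in>D. dual_le h f \<and> dual_le h g"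
    and pos: "\<forall>f\<in>D. dual_le 0 f" and inf0: "\<forall>h. (\<forall>f\<in>D. dual_le h f) \<longrightarrow> dual_le h 0"
    and big0: "\<exists>\<epsilon>>0. \<forall>f\<in>D. \<not> norm f < \<epsilon>"
    using assms unfolding dual_order_continuous_norm_def by blast
  obtain \<epsilon> where e: "0 < \<epsilon>" and big: "\<And>f. f \<in> D \<Longrightarrow> \<epsilon> \<le> norm f" using big0 by (auto simp: not_less)
  have posD: "g \<in> D \<Longrightarrow> pos_fun g" for g using pos by (simp add: pos_fun_dual)
  define pick :: "('a \<Rightarrow>\<^sub>L real) \<Rightarrow> 'a" where "pick g = (SOME a. 0 \<le> a \<and> norm a \<le> 1 \<and> \<epsilon> / 2 < blinfun_apply g a)" for g
  have pick: "g \<in> D \<Longrightarrow> 0 \<le> pick g \<and> norm (pick g) \<le> 1 \<and> \<epsilon> / 2 < blinfun_apply g (pick g)" for g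
    unfolding pick_def by (rule someI_ex) (rule big_norm_witness[OF posD e big])
  define nx :: "nat \<Rightarrow> ('a \<Rightarrow>\<^sub>L real) \<Rightarrow> 'a \<Rightarrow> ('a \<Rightarrow>\<^sub>L real)" where "nx n g S = (SOME g'. g' \<in> D \<and> dual_le g' g \<and> blinfun_apply g' (pprt ((4::real)^n *\<^sub>R S)) < \<epsilon> / 8)"
    for n g S
  have nx: "g \<in> D \<Longrightarrow> nx n g S \<in> D \<and> dual_le (nx n g S) g \<and> blinfun_apply (nx n g S) (pprt ((4::real)^n *\<^sub>R S)) < \<epsilon> / 8"
    for n g S
  proof -
    assume g: "g \<in> D"
    have "\<exists>g'\<in>D. dual_le g' g \<and> blinfun_apply g' (pprt ((4::real)^n *\<^sub>R S)) < \<epsilon> / 8"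
      by (rule dir_inf_below[OF ne dir pos inf0]) (simp_all add: e g)
    then have "\<exists>g'. g' \<in> D \<and> dual_le g' g \<and> blinfun_apply g' (pprt ((4::real)^n *\<^sub>R S)) < \<epsilon> / 8"
      by blast
    then show ?thesis unfolding nx_def by (rule someI_ex)
  qed
  obtain g0 where g0: "g0 \<in> D" using ne by blast
  define B where "B = rec_nat (g0, pick g0) (\<lambda>n p. (nx n (fst p) (snd p), snd p + pick (nx n (fst p) (snd p))))"
  have B0: "B 0 = (g0, pick g0)" and BS: "B (Suc n) = (nx n (fst (B n)) (snd (B n)), snd (B n) + pick (nx n (fst (B n)) (snd (B n))))" for n
    by (simp_all add: B_def)
  define G where "G n = fst (B n)" for n
  define a where "a n = pick (G n)" for n
  have GD: "G n \<in> D" for n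
  proof (induction n)
    case 0 then show ?case by (simp add: G_def B0 g0)
  next
    case (Suc n) then show ?case using nx[of "G n"] by (simp add: G_def BS)
  qed
  have GS: "G (Suc n) = nx n (G n) (snd (B n))" for n by (simp add: G_def BS)
  have Bsum: "snd (B n) = (\<Sum>i\<le>n. a i)" for n
  proof (induction n)
    case 0 then show ?case by (simp add: B0 a_def G_def)
  next
    case (Suc n) then show ?case by (simp add: BS a_def G_def)
  qed
  have apos: "0 \<le> a n" and anorm: "norm (a n) \<le> 1" and abig: "\<epsilon> / 2 < blinfun_apply (G n) (a n)" for n
    using pick[OF GD[of n]] by (simp_all add: a_def)
  have Gle: "dual_le (G (Suc n)) (G n)" for n using nx[OF GD[of n]] GS by simp
  have Gle0: "dual_le (G n) (G 0)" for n
  proof (induction n)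
    case 0 then show ?case by (simp add: dual_le_def)
  next
    case (Suc n) then show ?case using Gle[of n] by (force simp: dual_le_def)
  qed
  have Gsmall: "blinfun_apply (G (Suc n)) ((4::real)^n *\<^sub>R (\<Sum>i\<le>n. a i)) < \<epsilon> / 8" for n
  proof -
    have "0 \<le> (4::real)^n *\<^sub>R (\<Sum>i\<le>n. a i)" using apos by (simp add: sum_nonneg scaleR_nonneg_nonneg)
    then have "pprt ((4::real)^n *\<^sub>R (\<Sum>i\<le>n. a i)) = (4::real)^n *\<^sub>R (\<Sum>i\<le>n. a i)" by simp
    then show ?thesis using nx[OF GD[of n], of n "snd (B n)"] GS[of n] Bsum[of n] by simp
  qed
  obtain x0 y where x0: "0 \<le> x0" and y0: "\<forall>n. 0 \<le> y n \<and> y n \<le> a (Suc n)"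
    and ydisj: "\<forall>n m. n \<noteq> m \<longrightarrow> inf (y n) (y m) = 0"
    and yg0: "\<forall>g. pos_fun g \<longrightarrow> (\<forall>n. blinfun_apply g (a (Suc n))
            - blinfun_apply g (inf (a (Suc n)) ((4^n) *\<^sub>R (\<Sum>i\<le>n. a i)))
            - (1/2)^n * blinfun_apply g x0 \<le> blinfun_apply g (y n))"
    using disjointify[of a 1, OF apos anorm] by (elim exE conjE) (rule that)
  define f where "f = G 0"
  have fpos: "pos_fun f" unfolding f_def by (rule posD[OF GD])
  have "(\<lambda>n. (1/2::real)^n * blinfun_apply f x0) \<longlonglongrightarrow> 0"
    by (intro tendsto_mult_left_zero LIMSEQ_power_zero) simp
  then obtain N where N: "\<And>n. N \<le> n \<Longrightarrow> (1/2::real)^n * blinfun_apply f x0 < \<epsilon> / 8"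
    unfolding LIMSEQ_iff using e by (metis (no_types, lifting) abs_less_iff diff_zero real_norm_def zero_less_divide_iff zero_less_numeral)
  have fy: "\<epsilon> / 4 \<le> blinfun_apply f (y n)" if n: "N \<le> n" for n
  proof -
    let ?g = "G (Suc n)"
    have gp: "pos_fun ?g" by (rule posD[OF GD])
    have 1: "blinfun_apply ?g (a (Suc n)) - blinfun_apply ?g (inf (a (Suc n)) ((4^n) *\<^sub>R (\<Sum>i\<le>n. a i)))
            - (1/2)^n * blinfun_apply ?g x0 \<le> blinfun_apply ?g (y n)"
      using yg0 gp by blast
    have 2: "blinfun_apply ?g (inf (a (Suc n)) ((4^n) *\<^sub>R (\<Sum>i\<le>n. a i))) \<le> blinfun_apply ?g ((4::real)^n *\<^sub>R (\<Sum>i\<le>n. a i))"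
      by (rule pos_fun_le[OF gp]) simp
    have 3: "blinfun_apply ?g x0 \<le> blinfun_apply f x0" using Gle0[of "Suc n"] x0 by (simp add: f_def dual_le_def)
    have 4: "blinfun_apply ?g (y n) \<le> blinfun_apply f (y n)" using Gle0[of "Suc n"] y0 by (simp add: f_def dual_le_def)
    have 5: "(1/2::real)^n * blinfun_apply ?g x0 \<le> (1/2)^n * blinfun_apply f x0"
      using 3 by (simp add: mult_left_mono)
    have ar: "\<epsilon> / 4 \<le> Ff" if "A - B - C \<le> Dd" "B \<le> Z" "Dd \<le> Ff" "C \<le> C'" "C' < \<epsilon>/8" "Z < \<epsilon>/8" "\<epsilon>/2 < A"
      for A B C Dd Z Ff C' :: real using that by linarith
    show ?thesis by (rule ar[OF 1 2 4 5 N[OF n] Gsmall[of n] abig[of "Suc n"]])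
  qed
  define z where "z k = y (k + N)" for k
  have fz: "pos_fun f \<and> 0 < \<epsilon> / 4 \<and> (\<forall>n. 0 \<le> z n \<and> norm (z n) \<le> 1 \<and> \<epsilon> / 4 \<le> blinfun_apply f (z n))
      \<and> (\<forall>n m. n \<noteq> m \<longrightarrow> inf (z n) (z m) = 0)"
  proof (intro conjI allI impI)
    show "pos_fun f" by (rule fpos)
    show "0 < \<epsilon> / 4" using e by simp
    fix n
    show "0 \<le> z n" using y0 by (simp add: z_def)
    show "norm (z n) \<le> 1"
      using norm_mono_pos[of "y (n + N)" "a (Suc (n + N))"] y0 anorm[of "Suc (n + N)"] by (simp add: z_def)
    show "\<epsilon> / 4 \<le> blinfun_apply f (z n)" unfolding z_def by (rule fy) simp
    fix m assume "n \<noteq> m"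
    then show "inf (z n) (z m) = 0" using ydisj by (simp add: z_def)
  qed
  show ?thesis
    by (rule exI[of _ f], rule exI[of _ z], rule exI[of _ "\<epsilon> / 4"], rule fz)
qed


definition hb_good :: "'a::real_normed_vector \<Rightarrow> ('a \<times> real) set \<Rightarrow> bool" where
  "hb_good z G \<longleftrightarrow> (\<forall>x r s. (x, r) \<in> G \<longrightarrow> (x, s) \<in> G \<longrightarrow> r = s)
     \<and> (\<forall>x r y s. (x, r) \<in> G \<longrightarrow> (y, s) \<in> G \<longrightarrow> (x + y, r + s) \<in> G)
     \<and> (\<forall>c x r. (x, r) \<in> G \<longrightarrow> (c *\<^sub>R x, c * r) \<in> G)
     \<and> (\<forall>x r. (x, r) \<in> G \<longrightarrow> r \<le> norm x)
     \<and> (z, norm z) \<in> G"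

lemma hb_good_union:
  assumes C: "C \<in> chains {G. hb_good z G}" and ne: "C \<noteq> {}"
  shows "hb_good z (\<Union>C)"
proof -
  have two: "\<exists>G\<in>C. p \<in> G \<and> q \<in> G" if pq: "p \<in> \<Union>C" "q \<in> \<Union>C" for p q
  proof -
    obtain G1 G2 where G: "G1 \<in> C" "G2 \<in> C" "p \<in> G1" "q \<in> G2" using pq by blast
    then have "G1 \<subseteq> G2 \<or> G2 \<subseteq> G1" using chainsD[OF C] by blast
    then show ?thesis using G by blast
  qed
  have gd: "G \<in> C \<Longrightarrow> hb_good z G" for G using chainsD2[OF C] by blast
  show ?thesis unfolding hb_good_def
  proof (intro conjI allI impI)
    fix x r s assume "(x, r) \<in> \<Union>C" "(x, s) \<in> \<Union>C"
    then obtain G where "G \<in> C" "(x, r) \<in> G" "(x, s) \<in> G" using two by blast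
    then show "r = s" using gd unfolding hb_good_def by blast
  next
    fix x r y s assume "(x, r) \<in> \<Union>C" "(y, s) \<in> \<Union>C"
    then obtain G where "G \<in> C" "(x, r) \<in> G" "(y, s) \<in> G" using two by blast
    then show "(x + y, r + s) \<in> \<Union>C" using gd unfolding hb_good_def by blast
  next
    fix c x r assume "(x, r) \<in> \<Union>C"
    then obtain G where "G \<in> C" "(x, r) \<in> G" by blast
    then show "(c *\<^sub>R x, c * r) \<in> \<Union>C" using gd unfolding hb_good_def by blast
  next
    fix x r assume "(x, r) \<in> \<Union>C"
    then obtain G where "G \<in> C" "(x, r) \<in> G" by blast
    then show "r \<le> norm x" using gd unfolding hb_good_def by blast
  next
    obtain G where "G \<in> C" using ne by blast
    then show "(z, norm z) \<in> \<Union>C" using gd unfolding hb_good_def by blast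
  qed
qed

lemma hb_good_init:
  assumes z: "z \<noteq> 0"
  shows "hb_good z {(c *\<^sub>R z, c * norm z) | c. True}"
  unfolding hb_good_def
proof (intro conjI allI impI)
  fix x r s assume "(x, r) \<in> {(c *\<^sub>R z, c * norm z) | c. True}" "(x, s) \<in> {(c *\<^sub>R z, c * norm z) | c. True}"
  then obtain c d where "x = c *\<^sub>R z" "r = c * norm z" "x = d *\<^sub>R z" "s = d * norm z" by blast
  then show "r = s" using z by (metis scaleR_cancel_right)
next
  fix x r y s assume "(x, r) \<in> {(c *\<^sub>R z, c * norm z) | c. True}" "(y, s) \<in> {(c *\<^sub>R z, c * norm z) | c. True}"
  then obtain c d where "x = c *\<^sub>R z" "r = c * norm z" "y = d *\<^sub>R z" "s = d * norm z" by blast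
  then have "x + y = (c + d) *\<^sub>R z \<and> r + s = (c + d) * norm z" by (simp add: algebra_simps)
  then show "(x + y, r + s) \<in> {(c *\<^sub>R z, c * norm z) | c. True}" by blast
next
  fix e x r assume "(x, r) \<in> {(c *\<^sub>R z, c * norm z) | c. True}"
  then obtain c where "x = c *\<^sub>R z" "r = c * norm z" by blast
  then have "e *\<^sub>R x = (e * c) *\<^sub>R z \<and> e * r = (e * c) * norm z" by simp
  then show "(e *\<^sub>R x, e * r) \<in> {(c *\<^sub>R z, c * norm z) | c. True}" by blast
next
  fix x r assume "(x, r) \<in> {(c *\<^sub>R z, c * norm z) | c. True}"
  then obtain c where "x = c *\<^sub>R z" "r = c * norm z" by blast
  then show "r \<le> norm x" by (simp add: mult_right_mono)
next
  have "z = 1 *\<^sub>R z \<and> norm z = 1 * norm z" by simp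
  then show "(z, norm z) \<in> {(c *\<^sub>R z, c * norm z) | c. True}" by blast
qed

lemma hb_extend:
  assumes M: "hb_good z M" and w: "\<forall>r. (w, r) \<notin> M"
  shows "\<exists>M'. hb_good z M' \<and> M \<subseteq> M' \<and> M' \<noteq> M"
proof -
  have Mfun: "\<And>x r s. (x, r) \<in> M \<Longrightarrow> (x, s) \<in> M \<Longrightarrow> r = s"
    and Madd: "\<And>x r y s. (x, r) \<in> M \<Longrightarrow> (y, s) \<in> M \<Longrightarrow> (x + y, r + s) \<in> M"
    and Mscale: "\<And>c x r. (x, r) \<in> M \<Longrightarrow> (c *\<^sub>R x, c * r) \<in> M"
    and Mbnd: "\<And>x r. (x, r) \<in> M \<Longrightarrow> r \<le> norm x"
    and Mz: "(z, norm z) \<in> M"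
    using M unfolding hb_good_def by blast+
  have M0: "(0, 0) \<in> M" using Mscale[OF Mz, of 0] by simp
  define T where "T = (\<lambda>p. snd p - norm (fst p - w)) ` M"
  have Tne: "T \<noteq> {}" using M0 by (auto simp: T_def)
  have key: "r - norm (x - w) \<le> norm (y + w) - s" if "(x, r) \<in> M" "(y, s) \<in> M" for x r y s
  proof -
    have "r + s \<le> norm (x + y)" using Mbnd[OF Madd[OF that]] .
    also have "x + y = (x - w) + (y + w)" by simp
    also have "norm ((x - w) + (y + w)) \<le> norm (x - w) + norm (y + w)" by (rule norm_triangle_ineq)
    finally show ?thesis by simp
  qed
  have Tbdd: "bdd_above T"
    unfolding T_def using key[OF _ M0] by (intro bdd_aboveI2[where M="norm w"]) force
  define m where "m = Sup T"
  have ma: "r - norm (x - w) \<le> m" if "(x, r) \<in> M" for x r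
    unfolding m_def by (rule cSup_upper[OF _ Tbdd]) (use that in \<open>force simp: T_def\<close>)
  have mb: "m \<le> norm (y + w) - s" if "(y, s) \<in> M" for y s
    unfolding m_def by (rule cSup_least[OF Tne]) (use key that in \<open>auto simp: T_def\<close>)
  define M' where "M' = {(x + c *\<^sub>R w, r + c * m) | x r c. (x, r) \<in> M}"
  have sub: "M \<subseteq> M'"
  proof
    fix p assume "p \<in> M"
    moreover obtain x r where "p = (x, r)" by (cases p)
    ultimately show "p \<in> M'" unfolding M'_def by (intro CollectI exI[of _ x] exI[of _ r] exI[of _ 0]) simp
  qed
  have wm: "(w, m) \<in> M'"
    unfolding M'_def using M0 by (intro CollectI exI[of _ 0] exI[of _ 0] exI[of _ 1]) simp
  have ne: "M' \<noteq> M" using wm w by blast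
  have good: "hb_good z M'"
    unfolding hb_good_def
  proof (intro conjI allI impI)
    fix x r s assume a1: "(x, r) \<in> M'" and a2: "(x, s) \<in> M'"
    obtain x1 r1 c1 where 1: "x = x1 + c1 *\<^sub>R w" "r = r1 + c1 * m" "(x1, r1) \<in> M" using a1 unfolding M'_def by blast
    obtain x2 r2 c2 where 2: "x = x2 + c2 *\<^sub>R w" "s = r2 + c2 * m" "(x2, r2) \<in> M" using a2 unfolding M'_def by blast
    have c: "c1 = c2"
    proof (rule ccontr)
      assume ne: "c1 \<noteq> c2"
      have d: "(x2 + (-1) *\<^sub>R x1, r2 + (-1) * r1) \<in> M" by (rule Madd[OF 2(3) Mscale[OF 1(3)]])
      have "(x2 - x1) = (c1 - c2) *\<^sub>R w" using 1(1) 2(1) by (simp add: algebra_simps)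
      then have "w = inverse (c1 - c2) *\<^sub>R (x2 + (-1) *\<^sub>R x1)" using ne by simp
      then have "(w, inverse (c1 - c2) * (r2 + (-1) * r1)) \<in> M" using Mscale[OF d] by simp
      then show False using w by blast
    qed
    then have "x1 = x2" using 1(1) 2(1) by simp
    then have "r1 = r2" using Mfun 1(3) 2(3) by blast
    then show "r = s" using 1 2 c by simp
  next
    fix x r y s assume a1: "(x, r) \<in> M'" and a2: "(y, s) \<in> M'"
    obtain x1 r1 c1 where 1: "x = x1 + c1 *\<^sub>R w" "r = r1 + c1 * m" "(x1, r1) \<in> M" using a1 unfolding M'_def by blast
    obtain x2 r2 c2 where 2: "y = x2 + c2 *\<^sub>R w" "s = r2 + c2 * m" "(x2, r2) \<in> M" using a2 unfolding M'_def by blast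
    have "(x1 + x2, r1 + r2) \<in> M" by (rule Madd[OF 1(3) 2(3)])
    moreover have "x + y = (x1 + x2) + (c1 + c2) *\<^sub>R w" "r + s = (r1 + r2) + (c1 + c2) * m"
      using 1 2 by (simp_all add: algebra_simps)
    ultimately show "(x + y, r + s) \<in> M'" unfolding M'_def by blast
  next
    fix e x r assume a1: "(x, r) \<in> M'"
    obtain x1 r1 c1 where 1: "x = x1 + c1 *\<^sub>R w" "r = r1 + c1 * m" "(x1, r1) \<in> M" using a1 unfolding M'_def by blast
    have "(e *\<^sub>R x1, e * r1) \<in> M" by (rule Mscale[OF 1(3)])
    moreover have "e *\<^sub>R x = e *\<^sub>R x1 + (e * c1) *\<^sub>R w" "e * r = e * r1 + (e * c1) * m"
      using 1 by (simp_all add: algebra_simps)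
    ultimately show "(e *\<^sub>R x, e * r) \<in> M'" unfolding M'_def by blast
  next
    fix x r assume a1: "(x, r) \<in> M'"
    obtain x1 r1 c where 1: "x = x1 + c *\<^sub>R w" "r = r1 + c * m" "(x1, r1) \<in> M" using a1 unfolding M'_def by blast
    show "r \<le> norm x"
    proof (cases "0 < c")
      case True
      have "m \<le> norm (inverse c *\<^sub>R x1 + w) - inverse c * r1" by (rule mb[OF Mscale[OF 1(3)]])
      then have "c * m \<le> c * (norm (inverse c *\<^sub>R x1 + w) - inverse c * r1)"
        using True by (simp add: mult_left_mono)
      also have "c * norm (inverse c *\<^sub>R x1 + w) = norm (x1 + c *\<^sub>R w)"
      proof -
        have "x1 + c *\<^sub>R w = c *\<^sub>R (inverse c *\<^sub>R x1 + w)" using True by (simp add: algebra_simps)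
        then show ?thesis using True by simp
      qed
      then have "c * (norm (inverse c *\<^sub>R x1 + w) - inverse c * r1) = norm (x1 + c *\<^sub>R w) - r1"
        using True by (simp add: algebra_simps)
      finally show ?thesis using 1 by simp
    next
      case False
      show ?thesis
      proof (cases "c = 0")
        case True then show ?thesis using 1 Mbnd by simp
      next
        case False
        then have d: "0 < - c" using \<open>\<not> 0 < c\<close> by simp
        have "inverse (-c) * r1 - norm (inverse (-c) *\<^sub>R x1 - w) \<le> m" by (rule ma[OF Mscale[OF 1(3)]])
        then have "(-c) * (inverse (-c) * r1 - norm (inverse (-c) *\<^sub>R x1 - w)) \<le> (-c) * m"
          using d by (simp add: mult_left_mono)
        moreover have "(-c) * norm (inverse (-c) *\<^sub>R x1 - w) = norm (x1 + c *\<^sub>R w)"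
        proof -
          have "x1 + c *\<^sub>R w = (-c) *\<^sub>R (inverse (-c) *\<^sub>R x1 - w)" using d by (simp add: algebra_simps)
          then show ?thesis using d by simp
        qed
        ultimately have "r1 - norm (x1 + c *\<^sub>R w) \<le> (-c) * m" using d by (simp add: algebra_simps)
        then show ?thesis using 1 by simp
      qed
    qed
  next
    show "(z, norm z) \<in> M'" using sub Mz by blast
  qed
  show ?thesis using good sub ne by blast
qed

lemma hahn_banach_sep:
  fixes z :: "'a::real_normed_vector"
  assumes z: "z \<noteq> 0"
  shows "\<exists>\<phi>::'a \<Rightarrow> real. bounded_linear \<phi> \<and> \<phi> z \<noteq> 0"
proof -
  have "\<exists>M\<in>{G. hb_good z G}. \<forall>X\<in>{G. hb_good z G}. M \<subseteq> X \<longrightarrow> X = M"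
  proof (rule Zorn_Lemma2, intro ballI)
    fix C assume C: "C \<in> chains {G. hb_good z G}"
    show "\<exists>U\<in>{G. hb_good z G}. \<forall>X\<in>C. X \<subseteq> U"
    proof (cases "C = {}")
      case True then show ?thesis using hb_good_init[OF z] by blast
    next
      case False then show ?thesis using hb_good_union[OF C False] by blast
    qed
  qed
  then obtain M where M: "hb_good z M" and max: "\<And>X. hb_good z X \<Longrightarrow> M \<subseteq> X \<Longrightarrow> X = M" by blast
  have Mfun: "\<And>x r s. (x, r) \<in> M \<Longrightarrow> (x, s) \<in> M \<Longrightarrow> r = s"
    and Madd: "\<And>x r y s. (x, r) \<in> M \<Longrightarrow> (y, s) \<in> M \<Longrightarrow> (x + y, r + s) \<in> M"
    and Mscale: "\<And>c x r. (x, r) \<in> M \<Longrightarrow> (c *\<^sub>R x, c * r) \<in> M"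
    and Mbnd: "\<And>x r. (x, r) \<in> M \<Longrightarrow> r \<le> norm x"
    and Mz: "(z, norm z) \<in> M"
    using M unfolding hb_good_def by blast+
  have dom: "\<exists>r. (w, r) \<in> M" for w
  proof (rule ccontr)
    assume "\<not> ?thesis"
    then obtain M' where "hb_good z M'" "M \<subseteq> M'" "M' \<noteq> M" using hb_extend[OF M] by blast
    then show False using max by blast
  qed
  define \<phi> where "\<phi> w = (THE r. (w, r) \<in> M)" for w
  have phi: "(w, \<phi> w) \<in> M" for w
  proof -
    obtain r where r: "(w, r) \<in> M" using dom by blast
    have "(THE r. (w, r) \<in> M) = r" by (rule the_equality[of "\<lambda>r. (w, r) \<in> M", OF r]) (use Mfun r in blast)
    then show ?thesis using r by (simp add: \<phi>_def)
  qed
  have phi_eq: "(w, r) \<in> M \<Longrightarrow> \<phi> w = r" for w r using Mfun phi by blast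
  have padd: "\<phi> (x + y) = \<phi> x + \<phi> y" for x y by (rule phi_eq[OF Madd[OF phi phi]])
  have pscale: "\<phi> (c *\<^sub>R x) = c *\<^sub>R \<phi> x" for c x using phi_eq[OF Mscale[OF phi]] by simp
  have pbnd: "norm (\<phi> x) \<le> norm x * 1" for x
  proof -
    have "\<phi> x \<le> norm x" by (rule Mbnd[OF phi])
    moreover have "\<phi> (- x) \<le> norm (- x)" by (rule Mbnd[OF phi])
    moreover have "\<phi> (- x) = - \<phi> x" using pscale[of "-1" x] by simp
    ultimately show ?thesis by simp
  qed
  have bl: "bounded_linear \<phi>" by (rule bounded_linear_intro[OF padd pscale pbnd])
  have pz: "\<phi> z = norm z" by (rule phi_eq[OF Mz])
  show ?thesis by (rule exI[of _ \<phi>]) (use bl pz z in simp)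
qed


lemma compact_weak_null:
  fixes T :: "'a::real_normed_vector \<Rightarrow> 'b::real_normed_vector"
  assumes cT: "compact_op T" and bd: "\<And>n. norm (x n) \<le> M" and wn: "weakly_null x"
  shows "(\<lambda>n. norm (T (x n))) \<longlonglongrightarrow> 0"
proof (rule ccontr)
  assume "\<not> ?thesis"
  then obtain \<epsilon> where e: "0 < \<epsilon>" and fr: "\<forall>N. \<exists>n\<ge>N. \<not> norm (norm (T (x n)) - 0) < \<epsilon>"
    unfolding LIMSEQ_iff by blast
  define S where "S = {n. \<epsilon> \<le> norm (T (x n))}"
  have infS: "infinite S" unfolding infinite_nat_iff_unbounded_le S_def using fr by (auto simp: not_less)
  define r where "r = enumerate S"
  have r: "strict_mono r" unfolding r_def by (rule strict_mono_enumerate[OF infS])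
  have rS: "\<epsilon> \<le> norm (T (x (r n)))" for n using enumerate_in_set[OF infS, of n] by (simp add: r_def S_def)
  have bl: "bounded_linear T" and K: "compact (closure (T ` ball 0 1))" using cT by (simp_all add: compact_op_def)
  have M0: "0 \<le> M" using bd[of 0] norm_ge_zero order_trans by blast
  define w where "w n = T ((1 / (M + 1)) *\<^sub>R x (r n))" for n
  have wK: "w n \<in> closure (T ` ball 0 1)" for n
  proof -
    have "norm ((1 / (M + 1)) *\<^sub>R x (r n)) = norm (x (r n)) / (M + 1)" using M0 by simp
    also have "\<dots> < 1" using bd[of "r n"] M0 by (simp add: field_simps)
    finally have "(1 / (M + 1)) *\<^sub>R x (r n) \<in> ball 0 1" by simp
    then show ?thesis unfolding w_def by (meson closure_subset image_eqI subsetD)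
  qed
  obtain l r2 where l: "l \<in> closure (T ` ball 0 1)" and r2: "strict_mono r2" and wl: "(w \<circ> r2) \<longlonglongrightarrow> l"
    using seq_compactE[OF compact_imp_seq_compact[OF K], of w] wK by blast
  have wlin: "w n = (1 / (M + 1)) *\<^sub>R T (x (r n))" for n
    by (simp add: w_def linear_scale[OF bounded_linear.linear[OF bl]])
  have "\<phi> l = 0" if phi: "bounded_linear \<phi>" for \<phi> :: "'b \<Rightarrow> real"
  proof -
    have "bounded_linear (\<lambda>v. \<phi> (T v))" by (rule bounded_linear_compose[OF phi bl])
    then have "(\<lambda>n. \<phi> (T (x n))) \<longlonglongrightarrow> 0" using wn unfolding weakly_null_def by blast
    then have "((\<lambda>n. \<phi> (T (x n))) \<circ> (r \<circ> r2)) \<longlonglongrightarrow> 0"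
      by (rule LIMSEQ_subseq_LIMSEQ) (rule strict_mono_o[OF r r2])
    then have "(\<lambda>n. (1 / (M + 1)) * \<phi> (T (x (r (r2 n))))) \<longlonglongrightarrow> (1 / (M + 1)) * 0"
      by (intro tendsto_mult tendsto_const) (simp add: o_def)
    moreover have "(\<lambda>n. \<phi> ((w \<circ> r2) n)) \<longlonglongrightarrow> \<phi> l" by (rule bounded_linear.tendsto[OF phi wl])
    moreover have "\<phi> ((w \<circ> r2) n) = (1 / (M + 1)) * \<phi> (T (x (r (r2 n))))" for n
      by (simp add: wlin linear_scale[OF bounded_linear.linear[OF phi]])
    ultimately show ?thesis using LIMSEQ_unique by fastforce
  qed
  then have l0: "l = 0" using hahn_banach_sep[of l] by blast
  have "(\<lambda>n. norm ((w \<circ> r2) n)) \<longlonglongrightarrow> norm l" by (rule tendsto_norm[OF wl])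
  moreover have "\<epsilon> / (M + 1) \<le> norm ((w \<circ> r2) n)" for n
    using rS[of "r2 n"] M0 by (simp add: wlin field_simps add_mono mult_left_mono)
  ultimately have "\<epsilon> / (M + 1) \<le> norm l" by (intro LIMSEQ_le_const) auto
  then show False using l0 e M0 by (simp add: field_simps)
qed

lemma rank_one:
  fixes f :: "'a::banach_lattice \<Rightarrow>\<^sub>L real" and e :: 'a
  assumes f: "pos_fun f" and e: "0 \<le> e"
  shows "positive_op (\<lambda>x. blinfun_apply f x *\<^sub>R e)" "compact_op (\<lambda>x. blinfun_apply f x *\<^sub>R e)"
    "dunford_pettis_op (\<lambda>x. blinfun_apply f x *\<^sub>R e)"
proof -
  let ?T = "\<lambda>x. blinfun_apply f x *\<^sub>R e"
  show "positive_op ?T" using f e by (simp add: positive_op_def pos_fun_def scaleR_nonneg_nonneg)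
  have bl: "bounded_linear ?T"
    by (rule bounded_linear_compose[OF bounded_linear_scaleR_left blinfun.bounded_linear_right])
  have sub: "?T ` ball 0 1 \<subseteq> (\<lambda>t. t *\<^sub>R e) ` {- norm f..norm f}"
  proof
    fix v assume "v \<in> ?T ` ball 0 1"
    then obtain x where x: "x \<in> ball 0 1" "v = ?T x" by blast
    have "\<bar>blinfun_apply f x\<bar> \<le> norm f * norm x" using norm_blinfun[of f x] by simp
    also have "\<dots> \<le> norm f" using x(1) by (simp add: mult_left_le)
    finally show "v \<in> (\<lambda>t. t *\<^sub>R e) ` {- norm f..norm f}" using x(2) by (auto simp: abs_le_iff)
  qed
  have cK: "compact ((\<lambda>t. t *\<^sub>R e) ` {- norm f..norm f})"
    by (rule compact_continuous_image) (auto intro!: continuous_intros)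
  have "closure (?T ` ball 0 1) \<subseteq> (\<lambda>t. t *\<^sub>R e) ` {- norm f..norm f}"
    by (rule closure_minimal[OF sub compact_imp_closed[OF cK]])
  then have "closure (?T ` ball 0 1) = (\<lambda>t. t *\<^sub>R e) ` {- norm f..norm f} \<inter> closure (?T ` ball 0 1)" by blast
  then have "compact (closure (?T ` ball 0 1))" using compact_Int_closed[OF cK closed_closure] by metis
  then show "compact_op ?T" using bl by (simp add: compact_op_def)
  show "dunford_pettis_op ?T"
    unfolding dunford_pettis_op_def
  proof (intro conjI allI impI bl)
    fix x :: "nat \<Rightarrow> 'a" assume "weakly_null x"
    then have "(\<lambda>n. blinfun_apply f (x n)) \<longlonglongrightarrow> 0"
      unfolding weakly_null_def using blinfun.bounded_linear_right by blast
    then have "(\<lambda>n. \<bar>blinfun_apply f (x n)\<bar> * norm e) \<longlonglongrightarrow> \<bar>0\<bar> * norm e"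
      by (intro tendsto_mult tendsto_rabs tendsto_const)
    then show "(\<lambda>n. norm (?T (x n))) \<longlonglongrightarrow> 0" by simp
  qed
qed


lemma oc_imp_P1:
  fixes E :: "'a::banach_lattice itself"
  assumes oc: "dual_order_continuous_norm E"
  shows "\<forall>T :: 'a \<Rightarrow> 'a. positive_op T \<and> dunford_pettis_op T \<longrightarrow> uaw_dunford_pettis_op T"
proof (intro allI impI)
  fix T :: "'a \<Rightarrow> 'a" assume "positive_op T \<and> dunford_pettis_op T"
  then have dp: "dunford_pettis_op T" by simp
  show "uaw_dunford_pettis_op T"
    unfolding uaw_dunford_pettis_op_def
  proof (intro conjI allI impI)
    show "bounded_linear T" using dp by (simp add: dunford_pettis_op_def)
    fix x :: "nat \<Rightarrow> 'a" assume "bounded (range x)" "uaw_convergent x 0"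
    then have "weakly_null x" by (rule oc_uaw_weak[OF oc])
    then show "(\<lambda>n. norm (T (x n))) \<longlonglongrightarrow> 0" using dp by (simp add: dunford_pettis_op_def)
  qed
qed

lemma oc_imp_P2:
  fixes E :: "'a::banach_lattice itself"
  assumes oc: "dual_order_continuous_norm E"
  shows "\<forall>T :: 'a \<Rightarrow> 'a. positive_op T \<and> compact_op T \<longrightarrow> uaw_dunford_pettis_op T"
proof (intro allI impI)
  fix T :: "'a \<Rightarrow> 'a" assume "positive_op T \<and> compact_op T"
  then have cp: "compact_op T" by simp
  show "uaw_dunford_pettis_op T"
    unfolding uaw_dunford_pettis_op_def
  proof (intro conjI allI impI)
    show "bounded_linear T" using cp by (simp add: compact_op_def)
    fix x :: "nat \<Rightarrow> 'a" assume bd: "bounded (range x)" and u: "uaw_convergent x 0"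
    obtain M where M: "\<And>n. norm (x n) \<le> M" using bd unfolding bounded_iff by blast
    have "weakly_null x" using bd u by (rule oc_uaw_weak[OF oc])
    then show "(\<lambda>n. norm (T (x n))) \<longlonglongrightarrow> 0" by (rule compact_weak_null[OF cp M])
  qed
qed

lemma not_oc_imp:
  fixes E :: "'a::banach_lattice itself"
  assumes noc: "\<not> dual_order_continuous_norm E"
  shows "\<exists>T :: 'a \<Rightarrow> 'a. positive_op T \<and> compact_op T \<and> dunford_pettis_op T \<and> \<not> uaw_dunford_pettis_op T"
proof -
  obtain f :: "'a \<Rightarrow>\<^sub>L real" and y :: "nat \<Rightarrow> 'a" and \<delta> where f: "pos_fun f" and d: "0 < \<delta>"
    and y: "\<forall>n. 0 \<le> y n \<and> norm (y n) \<le> 1 \<and> \<delta> \<le> blinfun_apply f (y n)"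
    and disj: "\<forall>n m. n \<noteq> m \<longrightarrow> inf (y n) (y m) = 0"
    using not_oc_seq[OF noc] by (elim exE conjE) (rule that)
  define e where "e = y 0"
  have e0: "0 \<le> e" using y by (simp add: e_def)
  have ene: "e \<noteq> 0"
  proof
    assume "e = 0"
    then have "blinfun_apply f (y 0) = 0" by (simp add: e_def)
    then show False using y d by (metis not_le)
  qed
  define T where "T x = blinfun_apply f x *\<^sub>R e" for x
  have T: "positive_op T" "compact_op T" "dunford_pettis_op T"
    unfolding T_def using rank_one[OF f e0] by simp_all
  have "\<not> uaw_dunford_pettis_op T"
  proof
    assume "uaw_dunford_pettis_op T"
    moreover have "bounded (range y)" unfolding bounded_iff using y by blast
    moreover have "uaw_convergent y 0" by (rule disj_uaw_null) (use y disj in auto)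
    ultimately have lim: "(\<lambda>n. norm (T (y n))) \<longlonglongrightarrow> 0" unfolding uaw_dunford_pettis_op_def by blast
    have "\<delta> * norm e \<le> norm (T (y n))" for n
    proof -
      have "\<delta> \<le> \<bar>blinfun_apply f (y n)\<bar>" using y by (meson abs_ge_self order_trans)
      then show ?thesis by (simp add: T_def mult_right_mono)
    qed
    then have "\<delta> * norm e \<le> 0" by (intro LIMSEQ_le_const[OF lim]) auto
    then show False using d ene by (simp add: mult_le_0_iff)
  qed
  then show ?thesis using T by blast
qed

theorem corollary3p2:
  fixes E :: "'a::banach_lattice itself"
  shows "((\<forall>T :: 'a \<Rightarrow> 'a. positive_op T \<and> dunford_pettis_op T \<longrightarrow> uaw_dunford_pettis_op T)
           \<longleftrightarrow> (\<forall>T :: 'a \<Rightarrow> 'a. positive_op T \<and> compact_op T \<longrightarrow> uaw_dunford_pettis_op T))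
       \<and> ((\<forall>T :: 'a \<Rightarrow> 'a. positive_op T \<and> compact_op T \<longrightarrow> uaw_dunford_pettis_op T)
           \<longleftrightarrow> dual_order_continuous_norm E)"
proof (cases "dual_order_continuous_norm E")
  case True
  then show ?thesis using oc_imp_P1[OF True] oc_imp_P2[OF True] by blast
next
  case False
  obtain T :: "'a \<Rightarrow> 'a" where "positive_op T" "compact_op T" "dunford_pettis_op T" "\<not> uaw_dunford_pettis_op T"
    using not_oc_imp[OF False] by blast
  then show ?thesis using False by blast
qed

end
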